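(* Let $\mathcal{X}=\{1,\ldots,n\}$, let $p=(p(1),\ldots,p(n))$ be a probability vector with $p(1)\geq p(2)\geq\cdots\geq p(n)>0$ (the prior of the secret $X$), and let $k$ be a positive integer with $k<n$. Define $$j^*:=\min\Big\{j:1\leq j\leq k,\ p(j)\leq \tfrac{\sum_{i=j}^{n}p(i)}{k-j+1}\Big\}$$ and the probability vector $\pi=(\pi_1,\ldots,\pi_k)$ by $\pi_l=p(l)$ for $l\leq j^*-1$ and $\pi_l=\frac{\sum_{i=j^*}^n p(i)}{k-j^*+1}$ for $j^*\leq l\leq k$. Then: (A) For every generalised entropy $(\eta,F)$, the maximum of the posterior entropy $H(X\mid Y)$ over all feasible channels (channels all of whose outputs have pre-image of size at most $k$) equals $H(\pi)=\eta(F(\pi))$. (B) Let $\mathcal{M}^*$ be the family of all subsets $M\subseteq\mathcal{X}$ with $|M|=k$ and $\{1,\ldots,j^*-1\}\subseteq M$. The linear system $$\sum_{M\in\mathcal{M}^*:\, i\in M} v_M = p(i)\quad (i=j^*,\ldots,n),\qquad v_M\geq 0\ \ (M\in\mathcal{M}^* )$$ has a solution, and for any such solution $v$, the channel with output set $\{y_M: M\in\mathcal{M}^*\}$ and transition probabilities $p(y_M\mid i)=v_M/p(i)$ for $i\in\{j^*,\ldots,n\}$ with $i\in M$; $p(y_M\mid i)=v_M(k-j^*+1)/\sum_{j=j^*}^n p(j)$ for $i\in\{1,\ldots,j^*-1\}$; and $p(y_M\mid i)=0$ otherwise, is a feasible channel which satisfies $H(X\mid Y)=H(\pi)$ simultaneously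 for every generalised entropy $(\eta,F)$.
   Context: Generalised entropy: a pair $(\eta,F)$ where $F$ is a bounded real-valued function defined on probability vectors of every finite length, which is symmetric (its value is unchanged by permuting the entries) and expansible (its value is unchanged by appending zero entries), and $\eta$ is a real function of a real variable, such that either (a) $\eta$ is increasing and $F$ is concave, or (b) $\eta$ is decreasing and $F$ is convex (concave means $\lambda F(p_1)+(1-\lambda)F(p_2)\leq F(\lambda p_1+(1-\lambda)p_2)$ for all $\lambda\in[0,1]$ and probability vectors $p_1,p_2$ of the same length; convex with the reverse inequality). For a random variable with distribution $q$, $H(q)=\eta(F(q))$. For jointly distributed discrete $X,Y$, $H(X\mid Y)=\eta\big(\sum_{y\in\mathcal{Y}^+}p(y)F(p_{X\mid y})\big)$, where $\mathcal{Y}^+=\{y:p(y)>0\}$ and $p_{X\mid y}=(p(x\mid y))_{x\in\mathcal{X}}$ is the posterior vector. Channel: a discrete output set $\mathcal{Y}$ together with conditional probabilities $p(y\mid x)\geq 0$, $\sum_{y\in\mathcal{Y}}p(y\mid x)=1$ for each $x\in\mathcal{X}$; with input $X\sim p$, the output $Y$ has $p(y)=\sum_x p(x)p(y\mid x)$ and $p(x\mid y)=p(x)p(y\mid x)/p(y)$ for $p(y)>0$. The pre-image of an output $y$ is $\mathrm{PreIm}(y)=\{x\in\mathcal{X}:p(y\mid x)>0\}$. A channel is feasible if $|\mathrm{PreIm}(y)|\leq k$ for every $y\in\mathcal{Y}$. *)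

theory Defs
  imports "HOL-Analysis.Analysis" "HOL-Library.Multiset"
begin

definition prob_vec :: "real list \<Rightarrow> bool" where
  "prob_vec q \<longleftrightarrow> (\<forall>x\<in>set q. 0 \<le> x) \<and> sum_list q = 1"

definition concave_F :: "(real list \<Rightarrow> real) \<Rightarrow> bool" where
  "concave_F F \<longleftrightarrow> (\<forall>q1 q2 (l::real). prob_vec q1 \<and> prob_vec q2 \<and> length q1 = length q2
     \<and> 0 \<le> l \<and> l \<le> 1 \<longrightarrow>
     l * F q1 + (1 - l) * F q2 \<le> F (map2 (\<lambda>a b. l * a + (1 - l) * b) q1 q2))"

definition convex_F :: "(real list \<Rightarrow> real) \<Rightarrow> bool" where
  "convex_F F \<longleftrightarrow> (\<forall>q1 q2 (l::real). prob_vec q1 \<and> prob_vec q2 \<and> length q1 = length q2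
     \<and> 0 \<le> l \<and> l \<le> 1 \<longrightarrow>
     F (map2 (\<lambda>a b. l * a + (1 - l) * b) q1 q2) \<le> l * F q1 + (1 - l) * F q2)"

definition gen_entropy :: "(real \<Rightarrow> real) \<Rightarrow> (real list \<Rightarrow> real) \<Rightarrow> bool" where
  "gen_entropy \<eta> F \<longleftrightarrow>
     (\<exists>B. \<forall>q. prob_vec q \<longrightarrow> \<bar>F q\<bar> \<le> B) \<and>
     (\<forall>q q'. prob_vec q \<and> mset q' = mset q \<longrightarrow> F q' = F q) \<and>
     (\<forall>q. prob_vec q \<longrightarrow> F (q @ [0]) = F q) \<and>
     ((mono \<eta> \<and> concave_F F) \<or> (antimono \<eta> \<and> convex_F F))"

text \<open>Channels from the input set {1..n}, with output type 'y; W x y = p(y|x).\<close>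
definition channel :: "nat \<Rightarrow> (nat \<Rightarrow> 'y \<Rightarrow> real) \<Rightarrow> bool" where
  "channel n W \<longleftrightarrow> (\<forall>x\<in>{1..n}. (\<forall>y. 0 \<le> W x y) \<and> (W x has_sum 1) UNIV)"

definition out_prob :: "(nat \<Rightarrow> real) \<Rightarrow> nat \<Rightarrow> (nat \<Rightarrow> 'y \<Rightarrow> real) \<Rightarrow> 'y \<Rightarrow> real" where
  "out_prob p n W y = (\<Sum>x=1..n. p x * W x y)"

definition posterior :: "(nat \<Rightarrow> real) \<Rightarrow> nat \<Rightarrow> (nat \<Rightarrow> 'y \<Rightarrow> real) \<Rightarrow> 'y \<Rightarrow> real list" where
  "posterior p n W y = map (\<lambda>x. p x * W x y / out_prob p n W y) [1..<n+1]"

definition cond_entropy :: "(real \<Rightarrow> real) \<Rightarrow> (real list \<Rightarrow> real) \<Rightarrow> (nat \<Rightarrow> real) \<Rightarrow> nat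
     \<Rightarrow> (nat \<Rightarrow> 'y \<Rightarrow> real) \<Rightarrow> real" where
  "cond_entropy \<eta> F p n W =
     \<eta> (infsum (\<lambda>y. out_prob p n W y * F (posterior p n W y)) {y. out_prob p n W y > 0})"

definition preim :: "nat \<Rightarrow> (nat \<Rightarrow> 'y \<Rightarrow> real) \<Rightarrow> 'y \<Rightarrow> nat set" where
  "preim n W y = {x\<in>{1..n}. W x y > 0}"

definition feasible :: "nat \<Rightarrow> nat \<Rightarrow> (nat \<Rightarrow> 'y \<Rightarrow> real) \<Rightarrow> bool" where
  "feasible n k W \<longleftrightarrow> channel n W \<and> (\<forall>y. card (preim n W y) \<le> k)"

definition tail_mass :: "(nat \<Rightarrow> real) \<Rightarrow> nat \<Rightarrow> nat \<Rightarrow> real" where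
  "tail_mass p n j = (\<Sum>i=j..n. p i)"

definition jstar :: "(nat \<Rightarrow> real) \<Rightarrow> nat \<Rightarrow> nat \<Rightarrow> nat" where
  "jstar p n k = (LEAST j. 1 \<le> j \<and> j \<le> k \<and>
       p j \<le> tail_mass p n j / (real k - real j + 1))"

definition pi_vec :: "(nat \<Rightarrow> real) \<Rightarrow> nat \<Rightarrow> nat \<Rightarrow> real list" where
  "pi_vec p n k = map (\<lambda>l. if l < jstar p n k then p l
        else tail_mass p n (jstar p n k) / (real k - real (jstar p n k) + 1)) [1..<k+1]"

definition Mstar :: "nat \<Rightarrow> nat \<Rightarrow> nat \<Rightarrow> nat set set" where
  "Mstar n k j = {M. M \<subseteq> {1..n} \<and> card M = k \<and> {1..<j} \<subseteq> M}"

definition lin_sol :: "(nat \<Rightarrow> real) \<Rightarrow> nat \<Rightarrow> nat \<Rightarrow> (nat set \<Rightarrow> real) \<Rightarrow> bool" where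
  "lin_sol p n k v \<longleftrightarrow>
     (\<forall>M\<in>Mstar n k (jstar p n k). 0 \<le> v M) \<and>
     (\<forall>i\<in>{jstar p n k..n}. (\<Sum>M\<in>{M\<in>Mstar n k (jstar p n k). i \<in> M}. v M) = p i)"

text \<open>The channel built from a solution v; output y_M is represented by M itself;
  outputs not in Mstar have probability zero from every input.\<close>
definition opt_channel :: "(nat \<Rightarrow> real) \<Rightarrow> nat \<Rightarrow> nat \<Rightarrow> (nat set \<Rightarrow> real) \<Rightarrow> nat \<Rightarrow> nat set \<Rightarrow> real" where
  "opt_channel p n k v i M =
     (let j = jstar p n k in
      if M \<in> Mstar n k j then
        (if j \<le> i \<and> i \<le> n \<and> i \<in> M then v M / p i
         else if 1 \<le> i \<and> i < j then v M * (real k - real j + 1) / tail_mass p n j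
         else 0)
      else 0)"

end

theory Submission
  imports Defs
begin

definition vec :: "nat \<Rightarrow> (nat \<Rightarrow> real) \<Rightarrow> real list" where
  "vec N f = map f [1..<N+1]"

lemma set_upt1: "set [1..<N+1] = {1..N}" by auto

lemma sum_vec: "sum_list (vec N f) = sum f {1..N}"
  unfolding vec_def by (metis set_upt1 sum_set_upt_conv_sum_list_nat)

lemma prob_vec_vec: "prob_vec (vec N f) \<longleftrightarrow> (\<forall>i\<in>{1..N}. 0 \<le> f i) \<and> sum f {1..N} = 1"
  unfolding prob_vec_def sum_vec by (auto simp: vec_def)

lemma vec_cong: "(\<And>i. i\<in>{1..N} \<Longrightarrow> f i = g i) \<Longrightarrow> vec N f = vec N g"
  unfolding vec_def by (intro map_cong) auto

lemma mset_vec: "mset (vec N f) = image_mset f (mset_set {1..N})"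
  unfolding vec_def mset_map mset_upt by (simp add: atLeastLessThanSuc_atLeastAtMost)

lemma mset_vec_bij: assumes "bij_betw \<sigma> {1..N} {1..N}"
  shows "mset (vec N (f \<circ> \<sigma>)) = mset (vec N f)"
proof -
  have "image_mset (f \<circ> \<sigma>) (mset_set {1..N}) = image_mset f (image_mset \<sigma> (mset_set {1..N}))"
    by (simp add: multiset.map_comp)
  also have "image_mset \<sigma> (mset_set {1..N}) = mset_set (\<sigma> ` {1..N})"
    using assms by (simp add: bij_betw_def image_mset_mset_set)
  also have "\<sigma> ` {1..N} = {1..N}" using assms by (simp add: bij_betw_def)
  finally show ?thesis unfolding mset_vec .
qed

lemma vec_Suc: "vec (Suc N) f = vec N f @ [f (Suc N)]"
  unfolding vec_def by simp

lemma length_vec[simp]: "length (vec N f) = N" unfolding vec_def by simp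

lemma map2_vec: "map2 (\<lambda>a b. l * a + (1 - l) * b) (vec N f) (vec N g) = vec N (\<lambda>i. l * f i + (1 - l) * g i)"
  unfolding vec_def by (simp add: zip_map_map zip_same_conv_map comp_def)

definition sw :: "nat \<Rightarrow> nat \<Rightarrow> nat \<Rightarrow> nat" where
  "sw j m i = (if i = j then m else if i = m then j else i)"

lemma sw_bij: assumes "j \<in> S" "m \<in> S" shows "bij_betw (sw j m) S S"
proof -
  have inv: "sw j m (sw j m i) = i" for i by (simp add: sw_def)
  have "sw j m ` S \<subseteq> S" using assms by (auto simp: sw_def)
  then show ?thesis using assms
    by (intro bij_betw_byWitness[where f'="sw j m"]) (auto simp: inv)
qed

locale ent =
  fixes F :: "real list \<Rightarrow> real"
  assumes sym: "\<And>q q'. prob_vec q \<Longrightarrow> mset q' = mset q \<Longrightarrow> F q' = F q"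
    and expn: "\<And>q. prob_vec q \<Longrightarrow> F (q @ [0]) = F q"
    and conc: "concave_F F"
begin

lemma conc_vec:
  assumes "prob_vec (vec N f)" "prob_vec (vec N g)" "0 \<le> l" "l \<le> 1"
  shows "l * F (vec N f) + (1 - l) * F (vec N g) \<le> F (vec N (\<lambda>i. l * f i + (1 - l) * g i))"
  using conc assms unfolding concave_F_def map2_vec[symmetric] by auto

lemma F_bij: assumes "prob_vec (vec N f)" "bij_betw \<sigma> {1..N} {1..N}"
  shows "F (vec N (f \<circ> \<sigma>)) = F (vec N f)"
  using sym[OF assms(1) mset_vec_bij[OF assms(2)]] .

lemma F_mset: assumes "prob_vec (vec N f)" "mset (vec N' g) = mset (vec N f)"
  shows "F (vec N' g) = F (vec N f)"
  using sym assms by blast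

lemma F_ext: assumes "prob_vec (vec N f)" "N \<le> M" "\<And>i. N < i \<Longrightarrow> i \<le> M \<Longrightarrow> f i = 0"
  shows "F (vec M f) = F (vec N f)"
  using assms(2,3)
proof (induction M)
  case 0 then show ?case by simp
next
  case (Suc M)
  show ?case
  proof (cases "N = Suc M")
    case True then show ?thesis by simp
  next
    case False
    then have NM: "N \<le> M" using Suc by simp
    have IH: "F (vec M f) = F (vec N f)" using Suc NM by auto
    have pv: "prob_vec (vec M f)"
    proof -
      have "sum f {1..M} = sum f {1..N} + sum f {N+1..M}"
        using NM sum.ub_add_nat[of 1 N f "M - N"] by simp
      also have "sum f {N+1..M} = 0" using Suc.prems by (intro sum.neutral) auto
      finally have "sum f {1..M} = 1" using assms(1) unfolding prob_vec_vec by simp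
      moreover have "\<forall>i\<in>{1..M}. 0 \<le> f i"
      proof
        fix i assume i: "i \<in> {1..M}"
        show "0 \<le> f i"
        proof (cases "i \<le> N")
          case True then show ?thesis using assms(1) i unfolding prob_vec_vec by auto
        next
          case False then show ?thesis using Suc.prems i by auto
        qed
      qed
      ultimately show ?thesis unfolding prob_vec_vec by blast
    qed
    have "f (Suc M) = 0" using Suc.prems NM by auto
    then show ?thesis using IH expn[OF pv] by (simp add: vec_Suc)
  qed
qed

lemma tstep:
  assumes pv: "prob_vec (vec N q)" and j: "j \<in> {1..N}" and m: "m \<in> {1..N}" and jm: "j \<noteq> m"
    and d: "0 \<le> \<delta>" "\<delta> \<le> q j - q m"
  shows "F (vec N q) \<le> F (vec N (q(j := q j - \<delta>, m := q m + \<delta>)))"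
proof (cases "\<delta> = 0")
  case True then show ?thesis by (simp add: fun_upd_idem)
next
  case False
  define lam where "lam = \<delta> / (q j - q m)"
  have pos: "q j - q m > 0" using d False by linarith
  have l01: "0 \<le> lam" "lam \<le> 1" using d pos by (auto simp: lam_def field_simps)
  define g where "g = q \<circ> sw j m"
  have bij: "bij_betw (sw j m) {1..N} {1..N}" using sw_bij j m by blast
  have Fg: "F (vec N g) = F (vec N q)" unfolding g_def using F_bij[OF pv bij] .
  have pvg: "prob_vec (vec N g)"
    using pv unfolding g_def prob_vec_vec
    using sum.reindex_bij_betw[OF bij, of q] bij by (auto simp: bij_betw_def)
  have eq: "vec N (q(j := q j - \<delta>, m := q m + \<delta>)) = vec N (\<lambda>i. (1 - lam) * q i + (1 - (1 - lam)) * g i)"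
  proof (rule vec_cong)
    fix i assume "i \<in> {1..N}"
    have "\<delta> = lam * (q j - q m)" using pos by (simp add: lam_def)
    then show "(q(j := q j - \<delta>, m := q m + \<delta>)) i = (1 - lam) * q i + (1 - (1 - lam)) * g i"
      using jm by (auto simp: g_def sw_def algebra_simps)
  qed
  have "(1 - lam) * F (vec N q) + (1 - (1 - lam)) * F (vec N g) \<le> F (vec N (\<lambda>i. (1 - lam) * q i + (1 - (1 - lam)) * g i))"
    using conc_vec[OF pv pvg, of "1 - lam"] l01 by simp
  then show ?thesis using Fg eq by (simp add: algebra_simps)
qed

end


lemma sum_upd1:
  fixes q :: "nat \<Rightarrow> real"
  assumes "finite S" "j \<in> S"
  shows "sum (q(j := a)) S = sum q S - q j + a"
proof -
  have 1: "sum (q(j := a)) S = a + sum q (S - {j})"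
  proof -
    have "sum (q(j := a)) S = (q(j := a)) j + sum (q(j := a)) (S - {j})"
      by (rule sum.remove[OF assms])
    also have "\<dots> = a + sum q (S - {j})" by (auto intro!: sum.cong)
    finally show ?thesis .
  qed
  have 2: "sum q S = q j + sum q (S - {j})" by (rule sum.remove[OF assms])
  show ?thesis using 1 2 by linarith
qed

lemma sum_upd2:
  fixes q :: "nat \<Rightarrow> real"
  assumes "finite S" "j \<in> S" "m \<in> S" "j \<noteq> m"
  shows "sum (q(j := a, m := b)) S = sum q S - q j - q m + a + b"
proof -
  have "sum (q(j := a, m := b)) S = sum (q(j := a)) S - (q(j := a)) m + b"
    by (rule sum_upd1[OF assms(1,3)])
  also have "(q(j := a)) m = q m" using assms(4) by simp
  also have "sum (q(j := a)) S = sum q S - q j + a" by (rule sum_upd1[OF assms(1,2)])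
  finally show ?thesis by linarith
qed

context ent begin

lemma majS:
  assumes "prob_vec (vec N q)" "prob_vec (vec N \<pi>)"
    and dec: "\<And>i l. 1 \<le> i \<Longrightarrow> i \<le> l \<Longrightarrow> l \<le> N \<Longrightarrow> \<pi> l \<le> \<pi> i"
    and pre: "\<And>m. m \<le> N \<Longrightarrow> sum \<pi> {1..m} \<le> sum q {1..m}"
  shows "F (vec N q) \<le> F (vec N \<pi>)"
  using assms(1,4)
proof (induction "card {i\<in>{1..N}. q i \<noteq> \<pi> i}" arbitrary: q rule: less_induct)
  case less
  note pvq = less.prems(1) and preq = less.prems(2)
  have pi0: "\<And>i. i \<in> {1..N} \<Longrightarrow> 0 \<le> \<pi> i" and spi: "sum \<pi> {1..N} = 1"
    using assms(2) unfolding prob_vec_vec by auto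
  have q0: "\<And>i. i \<in> {1..N} \<Longrightarrow> 0 \<le> q i" and sq: "sum q {1..N} = 1"
    using pvq unfolding prob_vec_vec by auto
  show ?case
  proof (cases "{i\<in>{1..N}. q i \<noteq> \<pi> i} = {}")
    case True
    then have "vec N q = vec N \<pi>" by (intro vec_cong) auto
    then show ?thesis by simp
  next
    case False
    then obtain i0 where i0: "i0 \<in> {1..N}" "q i0 \<noteq> \<pi> i0" by auto
    have exm: "\<exists>m. m \<in> {1..N} \<and> q m < \<pi> m"
    proof (rule ccontr)
      assume "\<not> ?thesis"
      then have ge: "\<forall>i\<in>{1..N}. \<pi> i \<le> q i" by auto
      have "\<pi> i0 < q i0" using ge i0 by force
      then have "sum \<pi> {1..N} < sum q {1..N}"
        using ge i0 by (intro sum_strict_mono_ex1) auto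
      then show False using spi sq by simp
    qed
    define m where "m = (LEAST m. m \<in> {1..N} \<and> q m < \<pi> m)"
    have m: "m \<in> {1..N}" "q m < \<pi> m" using LeastI_ex[OF exm] unfolding m_def by auto
    have bel: "\<And>i. 1 \<le> i \<Longrightarrow> i < m \<Longrightarrow> \<pi> i \<le> q i"
    proof -
      fix i assume "1 \<le> i" "i < m"
      then have "\<not> (i \<in> {1..N} \<and> q i < \<pi> i)" unfolding m_def using not_less_Least by blast
      then show "\<pi> i \<le> q i" using \<open>i < m\<close> m(1) \<open>1 \<le> i\<close> by auto
    qed
    have "m \<ge> 2"
    proof (rule ccontr)
      assume "\<not> m \<ge> 2" then have "m = 1" using m by auto
      then show False using preq[of 1] m by simp
    qed
    have sm: "sum \<pi> {1..m} \<le> sum q {1..m}" using preq m by auto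
    have "sum \<pi> {1..m} = sum \<pi> {1..m-1} + \<pi> m" "sum q {1..m} = sum q {1..m-1} + q m"
      using \<open>m \<ge> 2\<close> sum.cl_ivl_Suc[of _ 1 "m-1"] by (auto simp del: sum.cl_ivl_Suc)
    then have "sum \<pi> {1..m-1} < sum q {1..m-1}" using sm m by linarith
    then have exj: "\<exists>j. j \<in> {1..<m} \<and> \<pi> j < q j"
    proof -
      assume lt: "sum \<pi> {1..m-1} < sum q {1..m-1}"
      show ?thesis
      proof (rule ccontr)
        assume nj: "\<not> ?thesis"
        have "q i \<le> \<pi> i" if "i \<in> {1..m-1}" for i
        proof -
          from that have "i \<in> {1..<m}" by auto
          then show ?thesis using nj by force
        qed
        then have "\<forall>i\<in>{1..m-1}. q i \<le> \<pi> i" by blast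
        then have "sum q {1..m-1} \<le> sum \<pi> {1..m-1}" by (intro sum_mono) auto
        then show False using lt by simp
      qed
    qed
    define j where "j = (GREATEST j. j \<in> {1..<m} \<and> \<pi> j < q j)"
    have j: "j \<in> {1..<m}" "\<pi> j < q j"
      using GreatestI_ex_nat[OF exj, of m] unfolding j_def by auto
    have mid: "\<And>i. j < i \<Longrightarrow> i < m \<Longrightarrow> q i = \<pi> i"
    proof -
      fix i assume "j < i" "i < m"
      have "\<not> (i \<in> {1..<m} \<and> \<pi> i < q i)"
      proof
        assume H: "i \<in> {1..<m} \<and> \<pi> i < q i"
        have "i \<le> j" unfolding j_def
          by (rule Greatest_le_nat[where P="\<lambda>j. j \<in> {1..<m} \<and> \<pi> j < q j" and k=i and b=m]) (use H in auto)
        then show False using \<open>j < i\<close> by simp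
      qed
      then show "q i = \<pi> i" using bel[of i] \<open>j < i\<close> \<open>i < m\<close> j by auto
    qed
    define \<delta> where "\<delta> = min (q j - \<pi> j) (\<pi> m - q m)"
    have dpos: "\<delta> > 0" using j m unfolding \<delta>_def by auto
    have jm: "j \<noteq> m" "j < m" using j by auto
    have jN: "j \<in> {1..N}" using j m by auto
    have pjm: "\<pi> m \<le> \<pi> j" using dec[of j m] j m by auto
    define q' where "q' = q(j := q j - \<delta>, m := q m + \<delta>)"
    have step: "F (vec N q) \<le> F (vec N q')"
      unfolding q'_def
      by (rule tstep[OF pvq jN m(1) jm(1)]) (use dpos pjm in \<open>auto simp: \<delta>_def\<close>)
    have dle: "\<delta> \<le> q j - \<pi> j" unfolding \<delta>_def by simp
    have q'0: "\<forall>i\<in>{1..N}. 0 \<le> q' i"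
    proof
      fix i assume i: "i \<in> {1..N}"
      show "0 \<le> q' i"
      proof (cases "i = m")
        case True then show ?thesis using q0[OF m(1)] dpos unfolding q'_def by simp
      next
        case False
        then show ?thesis using q0[OF i] pi0[OF jN] dle unfolding q'_def by auto
      qed
    qed
    have sq': "\<And>S. finite S \<Longrightarrow> j \<in> S \<Longrightarrow> m \<in> S \<Longrightarrow> sum q' S = sum q S"
      unfolding q'_def using jm by (subst sum_upd2) auto
    have pvq': "prob_vec (vec N q')"
      unfolding prob_vec_vec using q'0 sq' jN m sq by auto
    have D: "sum q {1..l} - sum \<pi> {1..l} \<ge> q j - \<pi> j" if "j \<le> l" "l < m" for l
      using that
    proof (induction l rule: dec_induct)
      case base
      have "sum q {1..j} = sum q {1..j-1} + q j" "sum \<pi> {1..j} = sum \<pi> {1..j-1} + \<pi> j"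
        using j sum.cl_ivl_Suc[of _ 1 "j-1"] by (auto simp del: sum.cl_ivl_Suc)
      moreover have "sum \<pi> {1..j-1} \<le> sum q {1..j-1}" using preq[of "j-1"] j m by auto
      ultimately show ?case by linarith
    next
      case (step l)
      have "q (Suc l) = \<pi> (Suc l)" using mid[of "Suc l"] step by auto
      then show ?case using step by simp
    qed
    have preq': "sum \<pi> {1..l} \<le> sum q' {1..l}" if "l \<le> N" for l
    proof (cases "l < j")
      case True
      have "sum q' {1..l} = sum q {1..l}" unfolding q'_def using True jm by (intro sum.cong) auto
      then show ?thesis using preq that by simp
    next
      case False
      show ?thesis
      proof (cases "l < m")
        case True
        have "sum q' {1..l} = sum (q(j := q j - \<delta>)) {1..l}"
          unfolding q'_def using True by (intro sum.cong) auto
        also have "\<dots> = sum q {1..l} - \<delta>"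
          using False j by (subst sum_upd1) auto
        finally show ?thesis using D[of l] False True unfolding \<delta>_def by linarith
      next
        case False2: False
        have "sum q' {1..l} = sum q {1..l}" using sq' False False2 jN m by auto
        then show ?thesis using preq that by simp
      qed
    qed
    have sub: "{i\<in>{1..N}. q' i \<noteq> \<pi> i} \<subset> {i\<in>{1..N}. q i \<noteq> \<pi> i}"
    proof
      show "{i\<in>{1..N}. q' i \<noteq> \<pi> i} \<subseteq> {i\<in>{1..N}. q i \<noteq> \<pi> i}"
      proof (rule subsetI)
        fix i assume i: "i \<in> {i\<in>{1..N}. q' i \<noteq> \<pi> i}"
        have "q i \<noteq> \<pi> i"
        proof (cases "i = j \<or> i = m")
          case True then show ?thesis using j(2) m(2) by auto
        next
          case False
          then have "q' i = q i" unfolding q'_def by simp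
          then show ?thesis using i by simp
        qed
        then show "i \<in> {i\<in>{1..N}. q i \<noteq> \<pi> i}" using i by simp
      qed
      have qj': "q' j = q j - \<delta>" "q' m = q m + \<delta>" using jm unfolding q'_def by auto
      have "\<delta> = q j - \<pi> j \<or> \<delta> = \<pi> m - q m" unfolding \<delta>_def by (simp add: min_def)
      then have "q' j = \<pi> j \<or> q' m = \<pi> m" using qj' by auto
      note disj = this
      show "{i\<in>{1..N}. q' i \<noteq> \<pi> i} \<noteq> {i\<in>{1..N}. q i \<noteq> \<pi> i}"
      proof
        assume eq: "{i\<in>{1..N}. q' i \<noteq> \<pi> i} = {i\<in>{1..N}. q i \<noteq> \<pi> i}"
        have "j \<in> {i\<in>{1..N}. q i \<noteq> \<pi> i}" using j(2) jN by simp
        then have A: "q' j \<noteq> \<pi> j" using eq by blast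
        have "m \<in> {i\<in>{1..N}. q i \<noteq> \<pi> i}" using m by simp
        then have B: "q' m \<noteq> \<pi> m" using eq by blast
        show False using A B disj by blast
      qed
    qed
    have "card {i\<in>{1..N}. q' i \<noteq> \<pi> i} < card {i\<in>{1..N}. q i \<noteq> \<pi> i}"
      by (rule psubset_card_mono[OF _ sub]) auto
    then have "F (vec N q') \<le> F (vec N \<pi>)" using less.hyps pvq' preq' by blast
    then show ?thesis using step by linarith
  qed
qed

end


context ent begin

lemma avgU:
  assumes "prob_vec (vec N q)" and R: "R \<subseteq> {1..N}" and sR: "sum q R = real (card R) * a"
  shows "F (vec N q) \<le> F (vec N (\<lambda>i. if i \<in> R then a else q i))"
  using assms(1) sR
proof (induction "card {i\<in>R. q i \<noteq> a}" arbitrary: q rule: less_induct)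
  case less
  note pvq = less.prems(1) and sRq = less.prems(2)
  have finR: "finite R" using R finite_subset by blast
  have q0: "\<And>i. i \<in> {1..N} \<Longrightarrow> 0 \<le> q i" and sq: "sum q {1..N} = 1"
    using pvq unfolding prob_vec_vec by auto
  show ?case
  proof (cases "{i\<in>R. q i \<noteq> a} = {}")
    case True
    then have "vec N q = vec N (\<lambda>i. if i \<in> R then a else q i)" by (intro vec_cong) auto
    then show ?thesis by simp
  next
    case False
    then obtain i0 where i0: "i0 \<in> R" "q i0 \<noteq> a" by auto
    have sc: "sum (\<lambda>_. a) R = real (card R) * a" by simp
    have exj: "\<exists>j\<in>R. a < q j"
    proof (rule ccontr)
      assume "\<not> ?thesis"
      then have le: "\<forall>i\<in>R. q i \<le> a" by auto
      then have "q i0 < a" using i0 by force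
      then have "sum q R < sum (\<lambda>_. a) R" using le i0 finR by (intro sum_strict_mono_ex1) auto
      then show False using sRq sc by simp
    qed
    have exm: "\<exists>m\<in>R. q m < a"
    proof (rule ccontr)
      assume "\<not> ?thesis"
      then have le: "\<forall>i\<in>R. a \<le> q i" by auto
      then have "a < q i0" using i0 by force
      then have "sum (\<lambda>_. a) R < sum q R" using le i0 finR by (intro sum_strict_mono_ex1) auto
      then show False using sRq sc by simp
    qed
    obtain j where j: "j \<in> R" "a < q j" using exj by blast
    obtain m where m: "m \<in> R" "q m < a" using exm by blast
    define \<delta> where "\<delta> = min (q j - a) (a - q m)"
    have dpos: "\<delta> > 0" using j m unfolding \<delta>_def by auto
    have jm: "j \<noteq> m" using j m by auto
    have jN: "j \<in> {1..N}" "m \<in> {1..N}" using j m R by auto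
    define q' where "q' = q(j := q j - \<delta>, m := q m + \<delta>)"
    have dle: "\<delta> \<le> q j - a" "\<delta> \<le> a - q m" unfolding \<delta>_def by simp_all
    have step: "F (vec N q) \<le> F (vec N q')"
      unfolding q'_def
      by (rule tstep[OF pvq jN jm]) (use dpos dle in linarith)+
    have q'0: "\<forall>i\<in>{1..N}. 0 \<le> q' i"
    proof
      fix i assume i: "i \<in> {1..N}"
      show "0 \<le> q' i"
      proof (cases "i = m")
        case True then show ?thesis using q0[OF jN(2)] dpos unfolding q'_def by simp
      next
        case False
        then show ?thesis using q0[OF i] q0[OF jN(2)] dle m unfolding q'_def by auto
      qed
    qed
    have sq': "\<And>S. finite S \<Longrightarrow> j \<in> S \<Longrightarrow> m \<in> S \<Longrightarrow> sum q' S = sum q S"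
      unfolding q'_def using jm by (subst sum_upd2) auto
    have pvq': "prob_vec (vec N q')"
      unfolding prob_vec_vec using q'0 sq'[of "{1..N}"] jN sq by auto
    have sRq': "sum q' R = real (card R) * a" using sq'[OF finR j(1) m(1)] sRq by simp
    have sub: "{i\<in>R. q' i \<noteq> a} \<subset> {i\<in>R. q i \<noteq> a}"
    proof
      show "{i\<in>R. q' i \<noteq> a} \<subseteq> {i\<in>R. q i \<noteq> a}"
      proof (rule subsetI)
        fix i assume i: "i \<in> {i\<in>R. q' i \<noteq> a}"
        have "q i \<noteq> a"
        proof (cases "i = j \<or> i = m")
          case True then show ?thesis using j(2) m(2) by auto
        next
          case False
          then have "q' i = q i" unfolding q'_def by simp
          then show ?thesis using i by simp
        qed
        then show "i \<in> {i\<in>R. q i \<noteq> a}" using i by simp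
      qed
      have qj': "q' j = q j - \<delta>" "q' m = q m + \<delta>" using jm unfolding q'_def by auto
      have "\<delta> = q j - a \<or> \<delta> = a - q m" unfolding \<delta>_def by (simp add: min_def)
      then have disj: "q' j = a \<or> q' m = a" using qj' by auto
      show "{i\<in>R. q' i \<noteq> a} \<noteq> {i\<in>R. q i \<noteq> a}"
      proof
        assume eq: "{i\<in>R. q' i \<noteq> a} = {i\<in>R. q i \<noteq> a}"
        have "j \<in> {i\<in>R. q i \<noteq> a}" using j by simp
        then have A: "q' j \<noteq> a" using eq by blast
        have "m \<in> {i\<in>R. q i \<noteq> a}" using m by simp
        then have B: "q' m \<noteq> a" using eq by blast
        show False using A B disj by blast
      qed
    qed
    have "card {i\<in>R. q' i \<noteq> a} < card {i\<in>R. q i \<noteq> a}"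
      by (rule psubset_card_mono[OF _ sub]) (use finR in auto)
    then have "F (vec N q') \<le> F (vec N (\<lambda>i. if i \<in> R then a else q' i))"
      using less.hyps pvq' sRq' by blast
    also have "vec N (\<lambda>i. if i \<in> R then a else q' i) = vec N (\<lambda>i. if i \<in> R then a else q i)"
    proof (rule vec_cong)
      fix i assume "i \<in> {1..N}"
      show "(if i \<in> R then a else q' i) = (if i \<in> R then a else q i)"
        using j(1) m(1) unfolding q'_def by auto
    qed
    finally show ?thesis using step by linarith
  qed
qed

lemma jensen:
  assumes "finite I" "\<And>i. i \<in> I \<Longrightarrow> 0 \<le> w i" "sum w I = 1"
    and "\<And>i. i \<in> I \<Longrightarrow> prob_vec (vec N (f i))"
  shows "(\<Sum>i\<in>I. w i * F (vec N (f i))) \<le> F (vec N (\<lambda>l. \<Sum>i\<in>I. w i * f i l))"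
  using assms
proof (induction I arbitrary: w rule: finite_induct)
  case empty then show ?case by simp
next
  case (insert a I)
  have wI: "sum w I = 1 - w a" using insert by simp
  show ?case
  proof (cases "w a = 1")
    case True
    then have "sum w I = 0" using wI by simp
    then have w0: "\<And>i. i \<in> I \<Longrightarrow> w i = 0" using insert sum_nonneg_eq_0_iff[of I w] by auto
    have "(\<Sum>i\<in>insert a I. w i * F (vec N (f i))) = F (vec N (f a))"
      using insert True w0 by simp
    moreover have "vec N (\<lambda>l. \<Sum>i\<in>insert a I. w i * f i l) = vec N (f a)"
      using insert True w0 by (intro vec_cong) simp
    ultimately show ?thesis by simp
  next
    case False
    have wa: "0 \<le> w a" "w a < 1"
    proof -
      show "0 \<le> w a" using insert by simp
      have "0 \<le> sum w I" using insert by (intro sum_nonneg) auto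
      then show "w a < 1" using wI False by simp
    qed
    define W where "W = 1 - w a"
    have Wpos: "W > 0" using wa by (simp add: W_def)
    define w' where "w' i = w i / W" for i
    have IH: "(\<Sum>i\<in>I. w' i * F (vec N (f i))) \<le> F (vec N (\<lambda>l. \<Sum>i\<in>I. w' i * f i l))"
    proof (rule insert.IH)
      show "\<And>i. i \<in> I \<Longrightarrow> 0 \<le> w' i" unfolding w'_def using insert Wpos by auto
      show "sum w' I = 1" unfolding w'_def using wI Wpos W_def by (simp add: sum_divide_distrib[symmetric])
      show "\<And>i. i \<in> I \<Longrightarrow> prob_vec (vec N (f i))" using insert by auto
    qed
    define g where "g l = (\<Sum>i\<in>I. w' i * f i l)" for l
    have pvg: "prob_vec (vec N g)"
      unfolding prob_vec_vec
    proof
      show "\<forall>l\<in>{1..N}. 0 \<le> g l"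
        unfolding g_def w'_def using insert Wpos
        by (auto intro!: sum_nonneg mult_nonneg_nonneg simp: prob_vec_vec)
      have "sum g {1..N} = (\<Sum>i\<in>I. w' i * sum (f i) {1..N})"
        unfolding g_def by (simp add: sum_distrib_left) (rule sum.swap)
      also have "\<dots> = (\<Sum>i\<in>I. w' i)" using insert by (intro sum.cong) (auto simp: prob_vec_vec)
      also have "\<dots> = 1" unfolding w'_def using wI Wpos W_def by (simp add: sum_divide_distrib[symmetric])
      finally show "sum g {1..N} = 1" .
    qed
    have pva: "prob_vec (vec N (f a))" using insert by simp
    have C: "w a * F (vec N (f a)) + (1 - w a) * F (vec N g) \<le> F (vec N (\<lambda>l. w a * f a l + (1 - w a) * g l))"
      using conc_vec[OF pva pvg] wa by simp
    have "(\<Sum>i\<in>insert a I. w i * F (vec N (f i))) = w a * F (vec N (f a)) + W * (\<Sum>i\<in>I. w' i * F (vec N (f i)))"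
      using insert Wpos unfolding w'_def by (simp add: sum_distrib_left)
    also have "\<dots> \<le> w a * F (vec N (f a)) + W * F (vec N g)"
      using IH Wpos unfolding g_def by simp
    also have "\<dots> \<le> F (vec N (\<lambda>l. w a * f a l + (1 - w a) * g l))" using C W_def by simp
    also have "vec N (\<lambda>l. w a * f a l + (1 - w a) * g l) = vec N (\<lambda>l. \<Sum>i\<in>insert a I. w i * f i l)"
    proof (rule vec_cong)
      fix l
      have "(1 - w a) * g l = (\<Sum>i\<in>I. w i * f i l)"
        unfolding g_def w'_def W_def[symmetric] using Wpos by (simp add: sum_distrib_left)
      then show "w a * f a l + (1 - w a) * g l = (\<Sum>i\<in>insert a I. w i * f i l)"
        using insert by simp
    qed
    finally show ?thesis .
  qed
qed

end


locale chan_ctx =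
  fixes n k :: nat and p :: "nat \<Rightarrow> real"
  assumes k0: "0 < k" and kn: "k < n"
    and dec1: "\<forall>i\<in>{1..<n}. p (i + 1) \<le> p i"
    and pn: "p n > 0"
    and p1: "(\<Sum>i=1..n. p i) = 1"
begin

definition "j = jstar p n k"
definition "kk = real k - real j + 1"
definition "T = tail_mass p n j"
definition "c = T / kk"
definition "pif l = (if l < j then p l else if l \<le> k then c else 0)"

lemma pmono: assumes "1 \<le> i" "i \<le> l" "l \<le> n" shows "p l \<le> p i"
proof -
  have "l \<le> n \<longrightarrow> p l \<le> p i" using assms(2)
  proof (induction l rule: dec_induct)
    case base then show ?case by simp
  next
    case (step l)
    show ?case
    proof
      assume "Suc l \<le> n"
      then have "l \<in> {1..<n}" using step assms(1) by auto
      then have "p (l + 1) \<le> p l" using dec1 by auto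
      then show "p (Suc l) \<le> p i" using step \<open>Suc l \<le> n\<close> by simp
    qed
  qed
  then show ?thesis using assms by simp
qed

lemma ppos: "i \<in> {1..n} \<Longrightarrow> 0 < p i"
  using pmono[of i n] pn by force

lemma p_nonneg: "1 \<le> x \<Longrightarrow> x \<le> n \<Longrightarrow> 0 \<le> p x"
  using ppos[of x] by simp

lemma split_sum: "1 \<le> a \<Longrightarrow> a \<le> n + 1 \<Longrightarrow> sum f {1..n} = sum f {1..<a} + sum f {a..n}"
proof -
  assume a: "1 \<le> a" "a \<le> n + 1"
  have "{1..n} = {1..<a} \<union> {a..n}" using a by auto
  moreover have "sum f ({1..<a} \<union> {a..n}) = sum f {1..<a} + sum f {a..n}"
    by (rule sum.union_disjoint) auto
  ultimately show ?thesis by simp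
qed

lemma tail_ge: "1 \<le> i \<Longrightarrow> i \<le> n \<Longrightarrow> p i \<le> tail_mass p n i"
  unfolding tail_mass_def using p_nonneg
  by (intro member_le_sum) auto

lemma jex: "\<exists>j. 1 \<le> j \<and> j \<le> k \<and> p j \<le> tail_mass p n j / (real k - real j + 1)"
  using tail_ge[of k] k0 kn by (intro exI[of _ k]) auto

lemma j_props: "1 \<le> j" "j \<le> k" "p j \<le> T / kk"
  using LeastI_ex[OF jex] unfolding j_def jstar_def T_def kk_def by auto

lemma j_min: "1 \<le> i \<Longrightarrow> i < j \<Longrightarrow> tail_mass p n i / (real k - real i + 1) < p i"
proof -
  assume i: "1 \<le> i" "i < j"
  have "\<not> (1 \<le> i \<and> i \<le> k \<and> p i \<le> tail_mass p n i / (real k - real i + 1))"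
    using not_less_Least[of i] i unfolding j_def jstar_def by blast
  then show ?thesis using i j_props by auto
qed

lemma kk_ge1: "kk \<ge> 1" using j_props unfolding kk_def by simp

lemma T_pos: "T > 0"
proof -
  have "p n \<le> T" unfolding T_def tail_mass_def using p_nonneg j_props kn
    by (intro member_le_sum) auto
  then show ?thesis using pn by simp
qed

lemma c_pos: "c > 0" unfolding c_def using T_pos kk_ge1 by simp

lemma head_sum: "sum p {1..<j} = 1 - T"
  using split_sum[of j p] j_props kn p1 unfolding T_def tail_mass_def by simp

lemma head_gt: "1 \<le> i \<Longrightarrow> i < j \<Longrightarrow> c < p i"
proof -
  assume i: "1 \<le> i" "i < j"
  define i' where "i' = j - 1"
  have i': "1 \<le> i'" "i' < j" "j = i' + 1" using i unfolding i'_def by auto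
  have tm: "tail_mass p n i' = p i' + T"
  proof -
    have "{i'..n} = insert i' {j..n}" using i' j_props kn by auto
    then show ?thesis unfolding tail_mass_def T_def using i' by simp
  qed
  have "tail_mass p n i' / (real k - real i' + 1) < p i'" by (rule j_min[OF i'(1,2)])
  moreover have "real k - real i' + 1 = kk + 1" unfolding kk_def using i' j_props by simp
  ultimately have "p i' + T < p i' * (kk + 1)" using tm kk_ge1
    by (simp add: divide_less_eq)
  then have "T < p i' * kk" by (simp add: algebra_simps)
  then have "c < p i'" unfolding c_def using kk_ge1 by (simp add: divide_less_eq mult.commute)
  moreover have "p i' \<le> p i" using pmono[of i i'] i i' j_props kn by auto
  ultimately show ?thesis by simp
qed

lemma pif_sum: "sum pif {1..n} = 1"
proof -
  have "sum pif {1..n} = sum pif {1..<j} + sum pif {j..n}" using split_sum[of j] j_props kn by simp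
  also have "sum pif {1..<j} = sum p {1..<j}" unfolding pif_def by (intro sum.cong) auto
  also have "sum pif {j..n} = sum pif {j..k} + sum pif {k+1..n}"
  proof -
    have "{j..n} = {j..k} \<union> {k+1..n}" using j_props kn by auto
    moreover have "sum pif ({j..k} \<union> {k+1..n}) = sum pif {j..k} + sum pif {k+1..n}"
      by (rule sum.union_disjoint) auto
    ultimately show ?thesis by simp
  qed
  also have "sum pif {k+1..n} = 0" unfolding pif_def using j_props by (intro sum.neutral) auto
  also have "sum pif {j..k} = sum (\<lambda>_. c) {j..k}" unfolding pif_def by (intro sum.cong) auto
  also have "\<dots> = kk * c" unfolding kk_def using j_props by (simp add: of_nat_diff)
  also have "kk * c = T" unfolding c_def using kk_ge1 by simp
  finally show ?thesis using head_sum by simp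
qed

lemma pif_nonneg: "1 \<le> l \<Longrightarrow> 0 \<le> pif l"
  unfolding pif_def using p_nonneg[of l] c_pos j_props kn by auto

lemma pif_dec: assumes a: "1 \<le> i" "i \<le> l" "l \<le> n" shows "pif l \<le> pif i"
proof (cases "k < l")
  case True
  then have "pif l = 0" unfolding pif_def using j_props by auto
  then show ?thesis using pif_nonneg a by simp
next
  case lk: False
  show ?thesis
  proof (cases "l < j")
    case True then show ?thesis using a pmono[of i l] unfolding pif_def by auto
  next
    case False
    then have A: "pif l = c" unfolding pif_def using lk by auto
    have "c \<le> pif i"
    proof (cases "i < j")
      case True then show ?thesis using head_gt[of i] a unfolding pif_def by auto
    next
      case False then show ?thesis using a lk unfolding pif_def by auto
    qed
    then show ?thesis using A by simp
  qed
qed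

lemma pv_pif: "prob_vec (vec n pif)"
  unfolding prob_vec_vec using pif_sum pif_nonneg by auto

lemma pi_vec_eq: "pi_vec p n k = vec k pif"
  unfolding pi_vec_def vec_def pif_def c_def T_def kk_def j_def
  by (intro map_cong) auto

lemma pv_pik: "prob_vec (vec k pif)"
proof -
  have "sum pif {1..n} = sum pif {1..k} + sum pif {k+1..n}"
  proof -
    have "{1..n} = {1..k} \<union> {k+1..n}" using kn by auto
    moreover have "sum pif ({1..k} \<union> {k+1..n}) = sum pif {1..k} + sum pif {k+1..n}"
      by (rule sum.union_disjoint) auto
    ultimately show ?thesis by simp
  qed
  moreover have "sum pif {k+1..n} = 0" unfolding pif_def using j_props by (intro sum.neutral) auto
  ultimately show ?thesis unfolding prob_vec_vec using pif_sum pif_nonneg by auto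
qed

end


definition Ksets :: "nat set \<Rightarrow> nat \<Rightarrow> nat \<Rightarrow> nat set set" where
  "Ksets X r i = {M. M \<subseteq> X \<and> card M = r \<and> i \<in> M}"

lemma Ksets_finite: "finite X \<Longrightarrow> finite (Ksets X r i)"
  unfolding Ksets_def by (rule finite_subset[of _ "Pow X"]) auto

lemma decomp:
  fixes X :: "nat set" and r :: nat
  assumes finX: "finite X" and rX: "r \<le> card X"
  shows "(\<forall>i\<in>X. 0 \<le> x i \<and> x i \<le> c) \<Longrightarrow> sum x X = real r * c \<Longrightarrow>
    \<exists>v. (\<forall>M. 0 \<le> v M) \<and> (\<forall>i\<in>X. sum v (Ksets X r i) = x i)"
proof (induction "card {i\<in>X. x i \<noteq> 0 \<and> x i \<noteq> c} + (if c > 0 then 1 else 0)"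
    arbitrary: x c rule: less_induct)
  case less
  note bnd = less.prems(1) and sx = less.prems(2)
  have zero_case: "\<exists>v. (\<forall>M. 0 \<le> v M) \<and> (\<forall>i\<in>X. sum v (Ksets X r i) = x i)"
    if "\<forall>i\<in>X. x i = 0"
    using that by (intro exI[of _ "\<lambda>_. 0"]) auto
  show ?case
  proof (cases "c > 0 \<and> r > 0")
    case False
    have "\<forall>i\<in>X. x i = 0"
    proof (cases "c > 0")
      case True
      then have "r = 0" using False by simp
      then have "sum x X = 0" using sx by simp
      then show ?thesis using sum_nonneg_eq_0_iff[OF finX, of x] bnd by auto
    next
      case False
      then show ?thesis using bnd by force
    qed
    then show ?thesis by (rule zero_case)
  next
    case True
    then have cpos: "c > 0" and rpos: "r > 0" by auto
    define P where "P = {i\<in>X. x i > 0}"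
    define Tt where "Tt = {i\<in>X. x i = c}"
    have TtP: "Tt \<subseteq> P" unfolding Tt_def P_def using cpos by auto
    have finP: "finite P" "finite Tt" unfolding P_def Tt_def using finX by auto
    have cardTt: "card Tt \<le> r"
    proof -
      have "real (card Tt) * c = sum x Tt" unfolding Tt_def by simp
      also have "\<dots> \<le> sum x X" using bnd finX unfolding Tt_def by (intro sum_mono2) auto
      finally have "real (card Tt) * c \<le> real r * c" using sx by simp
      then show ?thesis using cpos by simp
    qed
    have cardP: "r \<le> card P"
    proof -
      have "sum x X = sum x P"
        unfolding P_def using finX bnd by (intro sum.mono_neutral_right) force+
      also have "\<dots> \<le> sum (\<lambda>_. c) P" using bnd unfolding P_def by (intro sum_mono) auto
      also have "\<dots> = real (card P) * c" by simp
      finally have "real r * c \<le> real (card P) * c" using sx by simp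
      then show ?thesis using cpos by simp
    qed
    have "r - card Tt \<le> card (P - Tt)" using cardP cardTt TtP finP by (simp add: card_Diff_subset)
    then obtain E where E: "E \<subseteq> P - Tt" "card E = r - card Tt" "finite E"
      by (rule obtain_subset_with_card_n)
    define M0 where "M0 = Tt \<union> E"
    have M0P: "M0 \<subseteq> P" "Tt \<subseteq> M0" unfolding M0_def using E TtP by auto
    have M0X: "M0 \<subseteq> X" using M0P unfolding P_def by auto
    have cardM0: "card M0 = r"
    proof -
      have "card M0 = card Tt + card E" unfolding M0_def using E finP by (intro card_Un_disjoint) auto
      then show ?thesis using E cardTt by simp
    qed
    have M0ne: "M0 \<noteq> {}" using cardM0 rpos by auto
    have finM0: "finite M0" using M0X finX finite_subset by blast
    define Vs where "Vs = (x ` M0) \<union> ((\<lambda>i. c - x i) ` (X - M0))"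
    have finVs: "finite Vs" unfolding Vs_def using finM0 finX by simp
    have Vsne: "Vs \<noteq> {}" unfolding Vs_def using M0ne by simp
    define w where "w = Min Vs"
    have w_in: "w \<in> Vs" unfolding w_def using finVs Vsne by simp
    have w_le1: "\<And>i. i \<in> M0 \<Longrightarrow> w \<le> x i" unfolding w_def Vs_def using finVs by (simp add: Vs_def)
    have w_le2: "\<And>i. i \<in> X - M0 \<Longrightarrow> w \<le> c - x i" unfolding w_def Vs_def using finVs by (simp add: Vs_def)
    have pos1: "\<And>i. i \<in> M0 \<Longrightarrow> 0 < x i" using M0P unfolding P_def by auto
    have pos2: "\<And>i. i \<in> X - M0 \<Longrightarrow> x i < c"
    proof -
      fix i assume i: "i \<in> X - M0"
      then have "i \<notin> Tt" using M0P by auto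
      then have "x i \<noteq> c" using i unfolding Tt_def by auto
      then show "x i < c" using bnd i by force
    qed
    have wpos: "0 < w"
    proof -
      have "\<forall>a\<in>Vs. 0 < a" unfolding Vs_def using pos1 pos2 by auto
      then show ?thesis using w_in by blast
    qed
    define x' where "x' i = (if i \<in> M0 then x i - w else x i)" for i
    define c' where "c' = c - w"
    have bnd': "\<forall>i\<in>X. 0 \<le> x' i \<and> x' i \<le> c'"
    proof
      fix i assume i: "i \<in> X"
      show "0 \<le> x' i \<and> x' i \<le> c'"
      proof (cases "i \<in> M0")
        case True
        then show ?thesis using w_le1[OF True] bnd i unfolding x'_def c'_def by auto
      next
        case False
        then have "i \<in> X - M0" using i by simp
        then show ?thesis using w_le2[of i] bnd i False unfolding x'_def c'_def by auto
      qed
    qed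
    have sx': "sum x' X = real r * c'"
    proof -
      have "sum x' X = sum (\<lambda>i. x i - (if i \<in> M0 then w else 0)) X"
        unfolding x'_def by (intro sum.cong) auto
      also have "\<dots> = sum x X - sum (\<lambda>i. if i \<in> M0 then w else 0) X" by (simp add: sum_subtractf)
      also have "sum (\<lambda>i. if i \<in> M0 then w else 0) X = sum (\<lambda>_. w) M0"
        using finX M0X by (simp add: sum.If_cases Int_absorb1)
      also have "\<dots> = real r * w" using cardM0 by simp
      finally show ?thesis using sx unfolding c'_def by (simp add: algebra_simps)
    qed
    have meas: "card {i\<in>X. x' i \<noteq> 0 \<and> x' i \<noteq> c'} + (if c' > 0 then 1 else 0)
        < card {i\<in>X. x i \<noteq> 0 \<and> x i \<noteq> c} + (if c > 0 then 1 else 0)"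
    proof (cases "c' > 0")
      case False
      have "{i\<in>X. x' i \<noteq> 0 \<and> x' i \<noteq> c'} = {}" using bnd' False by force
      then have E0: "card {i\<in>X. x' i \<noteq> 0 \<and> x' i \<noteq> c'} = 0" by (simp only: card.empty)
      show ?thesis using False cpos by (simp only: E0 if_True if_False)
    next
      case True
      have sub: "{i\<in>X. x' i \<noteq> 0 \<and> x' i \<noteq> c'} \<subseteq> {i\<in>X. x i \<noteq> 0 \<and> x i \<noteq> c}"
      proof (rule subsetI)
        fix i assume i: "i \<in> {i\<in>X. x' i \<noteq> 0 \<and> x' i \<noteq> c'}"
        show "i \<in> {i\<in>X. x i \<noteq> 0 \<and> x i \<noteq> c}"
        proof (cases "i \<in> M0")
          case True
          then have "x i \<noteq> 0" using pos1 by force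
          moreover have "x i \<noteq> c" using i True unfolding x'_def c'_def by auto
          ultimately show ?thesis using i by simp
        next
          case False
          then have "i \<in> X - M0" using i by simp
          then have "x i \<noteq> c" using pos2 by force
          moreover have "x i \<noteq> 0" using i False unfolding x'_def by auto
          ultimately show ?thesis using i by simp
        qed
      qed
      obtain i0 where i0: "i0 \<in> X" "i0 \<in> {i\<in>X. x i \<noteq> 0 \<and> x i \<noteq> c}" "i0 \<notin> {i\<in>X. x' i \<noteq> 0 \<and> x' i \<noteq> c'}"
      proof (cases "w \<in> x ` M0")
        case True
        then obtain i where i: "i \<in> M0" "x i = w" by auto
        have "w < c" using True \<open>c' > 0\<close> unfolding c'_def by simp
        then have "i \<in> {i\<in>X. x i \<noteq> 0 \<and> x i \<noteq> c}" using i wpos M0X by auto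
        moreover have "x' i = 0" using i unfolding x'_def by simp
        ultimately show ?thesis using that i M0X by auto
      next
        case False
        then have "w \<in> (\<lambda>i. c - x i) ` (X - M0)" using w_in unfolding Vs_def by simp
        then obtain i where i: "i \<in> X - M0" "c - x i = w" by auto
        have "i \<in> {i\<in>X. x i \<noteq> 0 \<and> x i \<noteq> c}" using i wpos \<open>c' > 0\<close> unfolding c'_def by auto
        moreover have "x' i = c'" using i unfolding x'_def c'_def by auto
        ultimately show ?thesis using that i by auto
      qed
      have "{i\<in>X. x' i \<noteq> 0 \<and> x' i \<noteq> c'} \<subset> {i\<in>X. x i \<noteq> 0 \<and> x i \<noteq> c}"
        using sub i0 by blast
      then have "card {i\<in>X. x' i \<noteq> 0 \<and> x' i \<noteq> c'} < card {i\<in>X. x i \<noteq> 0 \<and> x i \<noteq> c}"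
        by (rule psubset_card_mono[rotated]) (use finX in simp)
      then show ?thesis using True cpos by simp
    qed
    obtain v' where v': "\<forall>M. 0 \<le> v' M" "\<forall>i\<in>X. sum v' (Ksets X r i) = x' i"
      using less.hyps[OF meas bnd' sx'] by blast
    define v where "v M = v' M + (if M = M0 then w else 0)" for M
    show ?thesis
    proof (intro exI[of _ v] conjI ballI allI)
      fix M show "0 \<le> v M" unfolding v_def using v' wpos by simp
    next
      fix i assume i: "i \<in> X"
      have finK: "finite (Ksets X r i)" by (rule Ksets_finite[OF finX])
      have "sum v (Ksets X r i) = sum v' (Ksets X r i) + sum (\<lambda>M. if M = M0 then w else 0) (Ksets X r i)"
        unfolding v_def by (simp add: sum.distrib)
      also have "sum (\<lambda>M. if M = M0 then w else 0) (Ksets X r i) = (if M0 \<in> Ksets X r i then w else 0)"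
        using finK by (simp add: sum.delta')
      also have "(M0 \<in> Ksets X r i) = (i \<in> M0)" unfolding Ksets_def using M0X cardM0 by auto
      finally show "sum v (Ksets X r i) = x i" using v'(2) i unfolding x'_def by auto
    qed
  qed
qed


lemma img_const: "(\<And>x. x \<in> B \<Longrightarrow> f x = d) \<Longrightarrow> finite B \<Longrightarrow>
    image_mset f (mset_set B) = replicate_mset (card B) d"
proof -
  assume h: "\<And>x. x \<in> B \<Longrightarrow> f x = d" and fin: "finite B"
  have "image_mset f (mset_set B) = image_mset (\<lambda>_. d) (mset_set B)"
    by (rule image_mset_cong) (use h fin in auto)
  also have "\<dots> = replicate_mset (card B) d" by (simp add: image_mset_const_eq)
  finally show ?thesis .
qed

lemma img3:
  assumes "finite A" "finite B" "finite C" "A \<inter> B = {}" "A \<inter> C = {}" "B \<inter> C = {}"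
    and "\<And>x. x \<in> B \<Longrightarrow> f x = d" "\<And>x. x \<in> C \<Longrightarrow> f x = e"
  shows "image_mset f (mset_set (A \<union> B \<union> C)) =
    image_mset f (mset_set A) + replicate_mset (card B) d + replicate_mset (card C) e"
proof -
  have "mset_set (A \<union> B \<union> C) = mset_set (A \<union> B) + mset_set C"
    using assms by (intro mset_set_Union) auto
  also have "mset_set (A \<union> B) = mset_set A + mset_set B"
    using assms by (intro mset_set_Union) auto
  finally show ?thesis using img_const[of B f d] img_const[of C f e] assms by simp
qed

context chan_ctx begin

lemma jstar_eq: "jstar p n k = j" by (simp add: j_def)

definition "r = k - j + 1"

lemma real_r: "real r = kk" unfolding r_def kk_def using j_props by (simp add: of_nat_diff)

lemma Ms_fin: "finite (Mstar n k j)"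
  unfolding Mstar_def by (rule finite_subset[of _ "Pow {1..n}"]) auto

lemma Ms_split:
  assumes "M \<in> Mstar n k j"
  shows "M = {1..<j} \<union> (M \<inter> {j..n})" "card (M \<inter> {j..n}) = r" "finite M" "card M = k"
    "M \<subseteq> {1..n}" "{1..<j} \<subseteq> M"
proof -
  have M: "M \<subseteq> {1..n}" "card M = k" "{1..<j} \<subseteq> M" using assms unfolding Mstar_def by auto
  show eq: "M = {1..<j} \<union> (M \<inter> {j..n})" using M by auto
  show fin: "finite M" using M finite_subset by blast
  have "card M = card {1..<j} + card (M \<inter> {j..n})"
    by (subst eq) (rule card_Un_disjoint, auto simp: fin)
  then show "card (M \<inter> {j..n}) = r" using M j_props unfolding r_def by simp
  show "card M = k" "M \<subseteq> {1..n}" "{1..<j} \<subseteq> M" using M by auto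
qed

lemma Ms_mk:
  assumes "M' \<subseteq> {j..n}" "card M' = r"
  shows "{1..<j} \<union> M' \<in> Mstar n k j"
proof -
  have fin: "finite M'" using assms(1) finite_subset by blast
  have "card ({1..<j} \<union> M') = card {1..<j} + card M'"
    by (rule card_Un_disjoint) (use assms fin in auto)
  then have "card ({1..<j} \<union> M') = k" using assms j_props unfolding r_def by simp
  moreover have "{1..<j} \<union> M' \<subseteq> {1..n}" using assms j_props kn by auto
  ultimately show ?thesis unfolding Mstar_def by auto
qed

lemma bij_K:
  assumes i: "i \<in> {j..n}"
  shows "bij_betw (\<lambda>M'. {1..<j} \<union> M') (Ksets {j..n} r i) {M\<in>Mstar n k j. i \<in> M}"
proof (rule bij_betw_byWitness[where f'="\<lambda>M. M \<inter> {j..n}"])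
  show "\<forall>a\<in>Ksets {j..n} r i. ({1..<j} \<union> a) \<inter> {j..n} = a" unfolding Ksets_def by auto
  show "\<forall>a'\<in>{M \<in> Mstar n k j. i \<in> M}. {1..<j} \<union> a' \<inter> {j..n} = a'"
    using Ms_split(1) by auto
  show "(\<lambda>M'. {1..<j} \<union> M') ` Ksets {j..n} r i \<subseteq> {M \<in> Mstar n k j. i \<in> M}"
    using Ms_mk unfolding Ksets_def by auto
  show "(\<lambda>M. M \<inter> {j..n}) ` {M \<in> Mstar n k j. i \<in> M} \<subseteq> Ksets {j..n} r i"
    using Ms_split(2) i unfolding Ksets_def by auto
qed

lemma lin_sol_ex: "\<exists>v. lin_sol p n k v"
proof -
  have rX: "r \<le> card {j..n}" unfolding r_def using kn j_props by simp
  have bnd: "\<forall>i\<in>{j..n}. 0 \<le> p i \<and> p i \<le> c"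
  proof
    fix i assume i: "i \<in> {j..n}"
    have "p i \<le> p j" using pmono[of j i] i j_props by auto
    then show "0 \<le> p i \<and> p i \<le> c" using p_nonneg[of i] i j_props unfolding c_def by auto
  qed
  have sx: "sum p {j..n} = real r * c" using real_r kk_ge1 unfolding c_def T_def tail_mass_def by simp
  obtain v' where v': "\<forall>M. 0 \<le> v' M" "\<forall>i\<in>{j..n}. sum v' (Ksets {j..n} r i) = p i"
    using decomp[OF _ rX bnd sx] by auto
  define v where "v M = v' (M \<inter> {j..n})" for M
  have "lin_sol p n k v"
    unfolding lin_sol_def jstar_eq
  proof (intro conjI ballI)
    fix M show "0 \<le> v M" unfolding v_def using v' by simp
  next
    fix i assume i: "i \<in> {j..n}"
    have "sum v {M\<in>Mstar n k j. i \<in> M} = sum (v \<circ> (\<lambda>M'. {1..<j} \<union> M')) (Ksets {j..n} r i)"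
      using sum.reindex_bij_betw[OF bij_K[OF i], of v] by (simp add: comp_def)
    also have "\<dots> = sum v' (Ksets {j..n} r i)"
    proof (rule sum.cong)
      fix x assume "x \<in> Ksets {j..n} r i"
      then have "x \<subseteq> {j..n}" unfolding Ksets_def by auto
      then have "({1..<j} \<union> x) \<inter> {j..n} = x" by auto
      then show "(v \<circ> (\<lambda>M'. {1..<j} \<union> M')) x = v' x" unfolding v_def by simp
    qed simp
    finally show "sum v {M\<in>Mstar n k j. i \<in> M} = p i" using v' i by simp
  qed
  then show ?thesis by blast
qed

end


context chan_ctx begin

lemma W_eq: "opt_channel p n k v i M =
  (if M \<in> Mstar n k j then (if j \<le> i \<and> i \<le> n \<and> i \<in> M then v M / p i
     else if 1 \<le> i \<and> i < j then v M * kk / T else 0) else 0)"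
  unfolding opt_channel_def Let_def jstar_eq T_def kk_def by simp

lemma col_sum: "i \<in> {j..n} \<Longrightarrow> (\<Sum>M\<in>Mstar n k j. if i \<in> M then g M else 0) = sum g {M\<in>Mstar n k j. i \<in> M}"
  using Ms_fin by (simp add: sum.inter_filter)

context
  fixes v assumes ls: "lin_sol p n k v"
begin

lemma vpos: "M \<in> Mstar n k j \<Longrightarrow> 0 \<le> v M"
  using ls unfolding lin_sol_def jstar_eq by auto

lemma vrow: "i \<in> {j..n} \<Longrightarrow> sum v {M\<in>Mstar n k j. i \<in> M} = p i"
  using ls unfolding lin_sol_def jstar_eq by auto

lemma vsum: "sum v (Mstar n k j) = c"
proof -
  have "T = (\<Sum>i\<in>{j..n}. sum v {M\<in>Mstar n k j. i \<in> M})"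
    unfolding T_def tail_mass_def using vrow by simp
  also have "\<dots> = (\<Sum>i\<in>{j..n}. \<Sum>M\<in>Mstar n k j. if i \<in> M then v M else 0)"
    by (rule sum.cong[OF refl], rule col_sum[symmetric])
  also have "\<dots> = (\<Sum>M\<in>Mstar n k j. \<Sum>i\<in>{j..n}. if i \<in> M then v M else 0)"
    by (rule sum.swap)
  also have "\<dots> = (\<Sum>M\<in>Mstar n k j. v M * kk)"
  proof (rule sum.cong)
    fix M assume M: "M \<in> Mstar n k j"
    have "(\<Sum>i\<in>{j..n}. if i \<in> M then v M else 0) = sum (\<lambda>_. v M) ({j..n} \<inter> M)"
      by (simp add: sum.inter_filter[symmetric] Int_def conj_commute)
    also have "\<dots> = v M * real r" using Ms_split(2)[OF M] by (simp add: Int_commute)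
    finally show "(\<Sum>i\<in>{j..n}. if i \<in> M then v M else 0) = v M * kk" using real_r by simp
  qed simp
  also have "\<dots> = sum v (Mstar n k j) * kk" by (simp add: sum_distrib_right)
  finally show ?thesis unfolding c_def using kk_ge1 by simp
qed

lemma opt_nonneg: "0 \<le> opt_channel p n k v i M"
  unfolding W_eq using vpos ppos[of i] T_pos kk_ge1 j_props by auto

lemma opt_row: assumes i: "i \<in> {1..n}" shows "(opt_channel p n k v i has_sum 1) UNIV"
proof -
  have "(opt_channel p n k v i has_sum 1) UNIV \<longleftrightarrow> (opt_channel p n k v i has_sum 1) (Mstar n k j)"
    by (rule has_sum_cong_neutral) (auto simp: W_eq)
  moreover have "sum (opt_channel p n k v i) (Mstar n k j) = 1"
  proof (cases "j \<le> i")
    case True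
    have "sum (opt_channel p n k v i) (Mstar n k j) = (\<Sum>M\<in>Mstar n k j. if i \<in> M then v M / p i else 0)"
      using True i by (intro sum.cong) (auto simp: W_eq)
    also have "\<dots> = sum (\<lambda>M. v M / p i) {M\<in>Mstar n k j. i \<in> M}"
      using col_sum[of i "\<lambda>M. v M / p i"] True i by simp
    also have "\<dots> = p i / p i" using vrow True i by (simp add: sum_divide_distrib[symmetric])
    finally show ?thesis using ppos[OF i] by simp
  next
    case False
    have "sum (opt_channel p n k v i) (Mstar n k j) = (\<Sum>M\<in>Mstar n k j. v M * kk / T)"
      using False i by (intro sum.cong) (auto simp: W_eq)
    also have "\<dots> = c * kk / T" using vsum by (simp add: sum_divide_distrib[symmetric] sum_distrib_right[symmetric])
    finally show ?thesis unfolding c_def using T_pos kk_ge1 by simp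
  qed
  ultimately show ?thesis using Ms_fin has_sum_finite by metis
qed

lemma opt_preim: "card (preim n (opt_channel p n k v) M) \<le> k"
proof (cases "M \<in> Mstar n k j")
  case True
  have "preim n (opt_channel p n k v) M \<subseteq> M"
    unfolding preim_def using True Ms_split(6)[OF True] by (auto simp: W_eq split: if_splits)
  then show ?thesis using card_mono[OF Ms_split(3)[OF True]] Ms_split(4)[OF True] by fastforce
next
  case False
  then have "preim n (opt_channel p n k v) M = {}" unfolding preim_def by (auto simp: W_eq)
  then show ?thesis by simp
qed

lemma opt_feasible: "feasible n k (opt_channel p n k v)"
  unfolding feasible_def channel_def using opt_nonneg opt_row opt_preim by auto

lemma opt_out: "out_prob p n (opt_channel p n k v) M = (if M \<in> Mstar n k j then v M * kk / T else 0)"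
proof (cases "M \<in> Mstar n k j")
  case False then show ?thesis unfolding out_prob_def by (simp add: W_eq)
next
  case True
  have "out_prob p n (opt_channel p n k v) M = (\<Sum>x\<in>{1..<j}. p x * opt_channel p n k v x M) + (\<Sum>x\<in>{j..n}. p x * opt_channel p n k v x M)"
    unfolding out_prob_def using split_sum[of j] j_props kn by simp
  also have "(\<Sum>x\<in>{1..<j}. p x * opt_channel p n k v x M) = (\<Sum>x\<in>{1..<j}. p x) * (v M * kk / T)"
    unfolding sum_distrib_right using True by (intro sum.cong) (auto simp: W_eq)
  also have "(\<Sum>x\<in>{j..n}. p x * opt_channel p n k v x M) = (\<Sum>x\<in>{j..n}. if x \<in> M then v M else 0)"
  proof (rule sum.cong)
    fix x assume x: "x \<in> {j..n}"
    then have "p x > 0" using ppos j_props by auto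
    then show "p x * opt_channel p n k v x M = (if x \<in> M then v M else 0)"
      using True x by (auto simp: W_eq)
  qed simp
  also have "\<dots> = sum (\<lambda>_. v M) ({j..n} \<inter> M)"
    by (simp add: sum.inter_filter[symmetric] Int_def conj_commute)
  also have "\<dots> = v M * kk" using Ms_split(2)[OF True] real_r by (simp add: Int_commute)
  finally have "out_prob p n (opt_channel p n k v) M = (1 - T) * (v M * kk / T) + v M * kk"
    using head_sum by simp
  also have "\<dots> = v M * kk / T" using T_pos by (simp add: field_simps)
  finally show ?thesis using True by simp
qed

lemma opt_post:
  assumes M: "M \<in> Mstar n k j" and vp: "v M > 0"
  shows "mset (posterior p n (opt_channel p n k v) M) = mset (vec n pif)"
proof -
  define g where "g x = p x * opt_channel p n k v x M / out_prob p n (opt_channel p n k v) M" for x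
  have post: "posterior p n (opt_channel p n k v) M = vec n g" unfolding posterior_def vec_def g_def by simp
  have o: "out_prob p n (opt_channel p n k v) M = v M * kk / T" using opt_out M by simp
  have g1: "g x = p x" if "x \<in> {1..<j}" for x
    using that M vp T_pos kk_ge1 unfolding g_def o by (auto simp: W_eq)
  have g2: "g x = c" if "x \<in> M \<inter> {j..n}" for x
  proof -
    have "p x > 0" using that ppos j_props by auto
    then show ?thesis using that M vp T_pos kk_ge1 unfolding g_def o c_def by (auto simp: W_eq)
  qed
  have g3: "g x = 0" if "x \<in> {j..n} - M" for x
    using that M unfolding g_def by (auto simp: W_eq)
  have s1: "{1..n} = {1..<j} \<union> (M \<inter> {j..n}) \<union> ({j..n} - M)" using j_props kn by auto
  have s2: "{1..n} = {1..<j} \<union> {j..k} \<union> {k+1..n}" using j_props kn by auto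
  have "image_mset g (mset_set {1..n}) = image_mset g (mset_set {1..<j}) + replicate_mset (card (M \<inter> {j..n})) c
      + replicate_mset (card ({j..n} - M)) 0"
    by (subst s1, rule img3) (use g2 g3 in auto)
  also have "image_mset g (mset_set {1..<j}) = image_mset pif (mset_set {1..<j})"
    by (rule image_mset_cong) (use g1 in \<open>auto simp: pif_def\<close>)
  also have "card (M \<inter> {j..n}) = card {j..k}" using Ms_split(2)[OF M] j_props unfolding r_def by simp
  also have "card ({j..n} - M) = card {k+1..n}"
  proof -
    have "{j..n} - M = {j..n} - (M \<inter> {j..n})" by auto
    then have "card ({j..n} - M) = card {j..n} - card (M \<inter> {j..n})"
      by (simp add: card_Diff_subset)
    then show ?thesis using Ms_split(2)[OF M] j_props kn unfolding r_def by simp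
  qed
  also have "image_mset pif (mset_set {1..<j}) + replicate_mset (card {j..k}) c + replicate_mset (card {k+1..n}) 0
     = image_mset pif (mset_set {1..n})"
  proof -
    have a: "\<And>x. x \<in> {j..k} \<Longrightarrow> pif x = c" unfolding pif_def by auto
    have b: "\<And>x. x \<in> {k+1..n} \<Longrightarrow> pif x = 0" unfolding pif_def using j_props by auto
    show ?thesis by (subst s2, rule img3[symmetric, OF _ _ _ _ _ _ a b]) (use j_props in auto)
  qed
  finally show ?thesis unfolding post mset_vec .
qed

lemma opt_entropy:
  assumes ent: "ent F"
  shows "cond_entropy \<eta> F p n (opt_channel p n k v) = \<eta> (F (pi_vec p n k))"
proof -
  interpret ent F by (rule ent)
  define Mp where "Mp = {M\<in>Mstar n k j. v M > 0}"
  have finMp: "finite Mp" unfolding Mp_def using Ms_fin by simp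
  have dom: "{y. out_prob p n (opt_channel p n k v) y > 0} = Mp"
    unfolding Mp_def using T_pos kk_ge1 by (auto simp: opt_out zero_less_mult_iff zero_less_divide_iff)
  have Fpost: "F (posterior p n (opt_channel p n k v) M) = F (pi_vec p n k)" if "M \<in> Mp" for M
  proof -
    have "F (posterior p n (opt_channel p n k v) M) = F (vec n pif)"
      using that unfolding Mp_def by (metis (no_types, lifting) mem_Collect_eq opt_post posterior_def pv_pif sym vec_def)
    also have "\<dots> = F (vec k pif)" by (rule F_ext[OF pv_pik]) (use kn j_props in \<open>auto simp: pif_def\<close>)
    finally show ?thesis using pi_vec_eq by simp
  qed
  have "infsum (\<lambda>y. out_prob p n (opt_channel p n k v) y * F (posterior p n (opt_channel p n k v) y)) Mp
      = (\<Sum>M\<in>Mp. out_prob p n (opt_channel p n k v) M * F (pi_vec p n k))"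
    using finMp Fpost by simp
  also have "\<dots> = (\<Sum>M\<in>Mp. v M * kk / T) * F (pi_vec p n k)"
    unfolding sum_distrib_right using Mp_def by (intro sum.cong) (auto simp: opt_out)
  also have "(\<Sum>M\<in>Mp. v M * kk / T) = (\<Sum>M\<in>Mstar n k j. v M * kk / T)"
    unfolding Mp_def using Ms_fin vpos by (intro sum.mono_neutral_left) force+
  also have "\<dots> = c * kk / T" using vsum by (simp add: sum_divide_distrib[symmetric] sum_distrib_right[symmetric])
  also have "\<dots> = 1" unfolding c_def using T_pos kk_ge1 by simp
  finally show ?thesis unfolding cond_entropy_def dom by simp
qed

end
end


lemma has_sum_finsum:
  fixes f :: "'i \<Rightarrow> 'a \<Rightarrow> real"
  assumes "finite I" "\<And>i. i \<in> I \<Longrightarrow> (f i has_sum s i) A"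
  shows "((\<lambda>y. \<Sum>i\<in>I. f i y) has_sum (\<Sum>i\<in>I. s i)) A"
  using assms
proof (induction I rule: finite_induct)
  case empty then show ?case by simp
next
  case (insert x I)
  have "((\<lambda>y. f x y + (\<Sum>i\<in>I. f i y)) has_sum (s x + (\<Sum>i\<in>I. s i))) A"
    using insert by (intro has_sum_add) auto
  then show ?case using insert by simp
qed

lemma prob_vec_mset: "prob_vec q \<Longrightarrow> mset q' = mset q \<Longrightarrow> prob_vec q'"
  unfolding prob_vec_def by (metis mset_eq_setD sum_mset_sum_list)

locale ub = chan_ctx n k p + ent F
  for n k p and F :: "real list \<Rightarrow> real" +
  fixes W :: "nat \<Rightarrow> 'y \<Rightarrow> real" and B :: real
  assumes feas: "feasible n k W"
    and bnd: "\<And>q. prob_vec q \<Longrightarrow> \<bar>F q\<bar> \<le> B"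
begin

definition "ob y = out_prob p n W y"
definition "pw x y = p x * W x y / ob y"
definition "Yp = {y. ob y > 0}"

lemma W_nn: "x \<in> {1..n} \<Longrightarrow> 0 \<le> W x y"
  using feas unfolding feasible_def channel_def by auto

lemma W_hs: "x \<in> {1..n} \<Longrightarrow> (W x has_sum 1) UNIV"
  using feas unfolding feasible_def channel_def by auto

lemma preim_card: "card (preim n W y) \<le> k"
  using feas unfolding feasible_def by auto

lemma preim_fin: "finite (preim n W y)" unfolding preim_def by simp

lemma preim_sub: "preim n W y \<subseteq> {1..n}" unfolding preim_def by auto

lemma ob_nn: "0 \<le> ob y"
  unfolding ob_def out_prob_def using W_nn p_nonneg by (intro sum_nonneg) auto

lemma pxW_hs: "x \<in> {1..n} \<Longrightarrow> ((\<lambda>y. p x * W x y) has_sum p x) UNIV"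
  using has_sum_cmult_right[OF W_hs, of x "p x"] by simp

lemma ob_hs: "(ob has_sum 1) UNIV"
proof -
  have "((\<lambda>y. \<Sum>x\<in>{1..n}. p x * W x y) has_sum (\<Sum>x\<in>{1..n}. p x)) UNIV"
    by (rule has_sum_finsum) (use pxW_hs in auto)
  then show ?thesis using p1 unfolding ob_def out_prob_def by simp
qed

lemma zero_out: "ob y = 0 \<Longrightarrow> x \<in> {1..n} \<Longrightarrow> p x * W x y = 0"
proof -
  assume o: "ob y = 0" and x: "x \<in> {1..n}"
  have "\<forall>x\<in>{1..n}. p x * W x y = 0"
    using o unfolding ob_def out_prob_def
    by (subst sum_nonneg_eq_0_iff[symmetric]) (use W_nn p_nonneg in auto)
  then show ?thesis using x by simp
qed

lemma ob_hsY: "(ob has_sum 1) Yp"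
proof -
  have "(ob has_sum 1) UNIV \<longleftrightarrow> (ob has_sum 1) Yp"
    by (rule has_sum_cong_neutral) (use ob_nn in \<open>auto simp: Yp_def less_le\<close>)
  then show ?thesis using ob_hs by simp
qed

lemma post_hs: assumes x: "x \<in> {1..n}" shows "((\<lambda>y. ob y * pw x y) has_sum p x) Yp"
proof -
  have "((\<lambda>y. p x * W x y) has_sum p x) UNIV \<longleftrightarrow> ((\<lambda>y. ob y * pw x y) has_sum p x) Yp"
  proof (rule has_sum_cong_neutral)
    show "\<And>y. y \<in> UNIV - Yp \<Longrightarrow> p x * W x y = 0"
      using zero_out x ob_nn unfolding Yp_def by (metis DiffD2 less_eq_real_def mem_Collect_eq)
    show "\<And>y. y \<in> Yp - UNIV \<Longrightarrow> ob y * pw x y = 0" by simp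
    show "\<And>y. y \<in> UNIV \<inter> Yp \<Longrightarrow> p x * W x y = ob y * pw x y"
      unfolding Yp_def pw_def by simp
  qed
  then show ?thesis using pxW_hs[OF x] by simp
qed

lemma posterior_eq: "posterior p n W y = vec n (\<lambda>x. pw x y)"
  unfolding posterior_def vec_def pw_def ob_def by simp

context
  fixes y assumes y: "y \<in> Yp"
begin

lemma oby: "ob y > 0" using y unfolding Yp_def by simp

lemma pw_nn: "x \<in> {1..n} \<Longrightarrow> 0 \<le> pw x y"
  unfolding pw_def using oby W_nn p_nonneg by auto

lemma pw_sum: "sum (\<lambda>x. pw x y) {1..n} = 1"
  unfolding pw_def using oby by (simp add: sum_divide_distrib[symmetric] ob_def out_prob_def)

lemma pv_post: "prob_vec (vec n (\<lambda>x. pw x y))"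
  unfolding prob_vec_vec using pw_nn pw_sum by auto

lemma pw_zero: "x \<in> {1..n} \<Longrightarrow> x \<notin> preim n W y \<Longrightarrow> pw x y = 0"
  unfolding preim_def pw_def using W_nn[of x y] by auto

end

end


lemma img3g:
  assumes "finite A" "finite D" "finite R" "A \<inter> D = {}" "A \<inter> R = {}" "D \<inter> R = {}"
    and "\<And>x. x \<in> R \<Longrightarrow> f x = 0"
  shows "image_mset f (mset_set (A \<union> D \<union> R)) =
    image_mset f (mset_set A) + image_mset f (mset_set D) + replicate_mset (card R) 0"
proof -
  have "mset_set (A \<union> D \<union> R) = mset_set (A \<union> D) + mset_set R"
    using assms by (intro mset_set_Union) auto
  also have "mset_set (A \<union> D) = mset_set A + mset_set D"
    using assms by (intro mset_set_Union) auto
  finally show ?thesis using img_const[of R f 0] assms by simp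
qed

context ub begin

definition "Aset y = preim n W y \<inter> {1..<j}"
definition "Bset y = preim n W y \<inter> {j..n}"
definition "Fr y = {1..k} - Aset y"
definition "sB y = sum (\<lambda>x. pw x y) {j..n}"
definition "u y l = (if l < j then pw l y else 0) + (if l \<in> Fr y then sB y / real (card (Fr y)) else 0)"

context
  fixes y assumes y: "y \<in> Yp"
begin

lemma A_sub: "Aset y \<subseteq> {1..k}" unfolding Aset_def using j_props by auto

lemma fins: "finite (Aset y)" "finite (Bset y)" "finite (Fr y)"
  unfolding Aset_def Bset_def Fr_def by auto

lemma card_Fr: "card (Fr y) = k - card (Aset y)"
  unfolding Fr_def using A_sub fins by (simp add: card_Diff_subset)

lemma preim_AB: "preim n W y = Aset y \<union> Bset y"
  unfolding Aset_def Bset_def using preim_sub[of y] by auto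

lemma cardB_le: "card (Bset y) \<le> card (Fr y)"
proof -
  have "card (preim n W y) = card (Aset y) + card (Bset y)"
    unfolding preim_AB by (rule card_Un_disjoint) (use fins in \<open>auto simp: Aset_def Bset_def\<close>)
  then show ?thesis using preim_card[of y] card_Fr by simp
qed

lemma sB_eq: "sB y = sum (\<lambda>x. pw x y) (Bset y)"
  unfolding sB_def Bset_def
proof (rule sum.mono_neutral_right)
  show "\<forall>i\<in>{j..n} - preim n W y \<inter> {j..n}. pw i y = 0"
  proof
    fix i assume i: "i \<in> {j..n} - preim n W y \<inter> {j..n}"
    then have "i \<in> {1..n}" "i \<notin> preim n W y" using j_props by auto
    then show "pw i y = 0" by (rule pw_zero[OF y])
  qed
qed auto

lemma Fr_avg: "real (card (Fr y)) * (sB y / real (card (Fr y))) = sB y"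
proof (cases "card (Fr y) = 0")
  case True
  then have "card (Bset y) = 0" using cardB_le by simp
  then have "Bset y = {}" using fins by simp
  then have "sB y = 0" using sB_eq by simp
  then show ?thesis by simp
next
  case False then show ?thesis by simp
qed

lemma u_nn: "l \<in> {1..n} \<Longrightarrow> 0 \<le> u y l"
proof -
  assume l: "l \<in> {1..n}"
  have "0 \<le> sB y" unfolding sB_def using pw_nn[OF y] j_props by (intro sum_nonneg) auto
  then show ?thesis unfolding u_def using pw_nn[OF y l] by auto
qed

lemma u_sum: "sum (u y) {1..n} = 1"
proof -
  have "sum (u y) {1..n} = (\<Sum>l\<in>{1..n}. if l < j then pw l y else 0) + (\<Sum>l\<in>{1..n}. if l \<in> Fr y then sB y / real (card (Fr y)) else 0)"
    unfolding u_def by (simp add: sum.distrib)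
  also have "(\<Sum>l\<in>{1..n}. if l < j then pw l y else 0) = sum (\<lambda>x. pw x y) {1..<j}"
  proof -
    have "(\<Sum>l\<in>{1..n}. if l < j then pw l y else 0) = sum (\<lambda>x. pw x y) ({1..n} \<inter> {l. l < j})"
      by (simp add: sum.inter_restrict)
    also have "{1..n} \<inter> {l. l < j} = {1..<j}" using j_props kn by auto
    finally show ?thesis .
  qed
  also have "(\<Sum>l\<in>{1..n}. if l \<in> Fr y then sB y / real (card (Fr y)) else 0) = (\<Sum>l\<in>Fr y. if l \<in> Fr y then sB y / real (card (Fr y)) else 0)"
    by (rule sum.mono_neutral_right) (use kn in \<open>auto simp: Fr_def\<close>)
  also have "\<dots> = sum (\<lambda>_. sB y / real (card (Fr y))) (Fr y)" by (rule sum.cong) auto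
  also have "sum (\<lambda>_. sB y / real (card (Fr y))) (Fr y) = sB y" using Fr_avg by simp
  also have "sum (\<lambda>x. pw x y) {1..<j} + sB y = 1"
    using split_sum[of j "\<lambda>x. pw x y"] j_props kn pw_sum[OF y] unfolding sB_def by simp
  finally show ?thesis .
qed

lemma pv_u: "prob_vec (vec n (u y))"
  unfolding prob_vec_vec using u_nn u_sum by auto

lemma U1: "F (vec n (\<lambda>x. pw x y)) \<le> F (vec n (u y))"
proof -
  obtain D where D: "D \<subseteq> Fr y" "card D = card (Bset y)" "finite D"
    using cardB_le by (rule obtain_subset_with_card_n)
  obtain h where h: "bij_betw h D (Bset y)"
    using finite_same_card_bij[OF D(3) fins(2) D(2)] by blast
  define s where "s l = (if l \<in> Aset y then pw l y else if l \<in> D then pw (h l) y else 0)" for l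
  have AD: "Aset y \<inter> D = {}" using D unfolding Fr_def by auto
  have Dn: "D \<subseteq> {1..n}" using D kn unfolding Fr_def by auto
  have An: "Aset y \<subseteq> {1..n}" unfolding Aset_def using preim_sub by auto
  have Bn: "Bset y \<subseteq> {1..n}" unfolding Bset_def using preim_sub by auto
  have AB: "Aset y \<inter> Bset y = {}" unfolding Aset_def Bset_def by auto
  have e1: "{1..n} = Aset y \<union> D \<union> ({1..n} - Aset y - D)" using Dn An by auto
  have e2: "{1..n} = Aset y \<union> Bset y \<union> ({1..n} - Aset y - Bset y)" using Bn An by auto
  have cardR: "card ({1..n} - Aset y - D) = card ({1..n} - Aset y - Bset y)"
  proof -
    have 1: "{1..n} - Aset y - D = {1..n} - (Aset y \<union> D)" by auto
    have 2: "card ({1..n} - (Aset y \<union> D)) = n - card (Aset y \<union> D)"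
      using Dn An by (subst card_Diff_subset) (auto intro: finite_subset)
    have 3: "card (Aset y \<union> D) = card (Aset y) + card D" using AD fins D by (intro card_Un_disjoint) auto
    have 4: "{1..n} - Aset y - Bset y = {1..n} - (Aset y \<union> Bset y)" by auto
    have 5: "card ({1..n} - (Aset y \<union> Bset y)) = n - card (Aset y \<union> Bset y)"
      using Bn An by (subst card_Diff_subset) (auto intro: finite_subset)
    have 6: "card (Aset y \<union> Bset y) = card (Aset y) + card (Bset y)" using AB fins by (intro card_Un_disjoint) auto
    show ?thesis unfolding 1 2 3 4 5 6 D(2) ..
  qed
  have ms: "mset (vec n s) = mset (vec n (\<lambda>x. pw x y))"
  proof -
    have "image_mset s (mset_set {1..n}) = image_mset s (mset_set (Aset y)) + image_mset s (mset_set D)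
        + replicate_mset (card ({1..n} - Aset y - D)) 0"
      by (subst e1, rule img3g) (use AD fins D in \<open>auto simp: s_def\<close>)
    also have "image_mset s (mset_set (Aset y)) = image_mset (\<lambda>x. pw x y) (mset_set (Aset y))"
      by (rule image_mset_cong) (use fins in \<open>auto simp: s_def\<close>)
    also have "image_mset s (mset_set D) = image_mset ((\<lambda>x. pw x y) \<circ> h) (mset_set D)"
      by (rule image_mset_cong) (use AD D in \<open>auto simp: s_def\<close>)
    also have "\<dots> = image_mset (\<lambda>x. pw x y) (image_mset h (mset_set D))"
      by (simp add: multiset.map_comp)
    also have "image_mset h (mset_set D) = mset_set (Bset y)"
      using h by (simp add: bij_betw_def image_mset_mset_set)
    also have "image_mset (\<lambda>x. pw x y) (mset_set (Aset y)) + image_mset (\<lambda>x. pw x y) (mset_set (Bset y))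
        + replicate_mset (card ({1..n} - Aset y - D)) 0 = image_mset (\<lambda>x. pw x y) (mset_set {1..n})"
      unfolding cardR
      by (subst (2) e2, rule img3g[symmetric]) (use AB fins pw_zero[OF y] preim_AB in auto)
    finally show ?thesis unfolding mset_vec .
  qed
  have F1: "F (vec n s) = F (vec n (\<lambda>x. pw x y))" by (rule F_mset[OF pv_post[OF y] ms])
  have pvs: "prob_vec (vec n s)" by (rule prob_vec_mset[OF pv_post[OF y] ms])
  have sFr: "sum s (Fr y) = real (card (Fr y)) * (sB y / real (card (Fr y)))"
  proof -
    have "sum s (Fr y) = sum s D"
      by (rule sum.mono_neutral_right) (use D fins in \<open>auto simp: s_def Fr_def\<close>)
    also have "\<dots> = sum ((\<lambda>x. pw x y) \<circ> h) D"
      by (rule sum.cong) (use AD in \<open>auto simp: s_def\<close>)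
    also have "\<dots> = sum (\<lambda>x. pw x y) (Bset y)"
      using sum.reindex_bij_betw[OF h, of "\<lambda>x. pw x y"] by (simp add: comp_def)
    finally show ?thesis using sB_eq Fr_avg by simp
  qed
  have FrN: "Fr y \<subseteq> {1..n}" unfolding Fr_def using kn by auto
  have U: "F (vec n s) \<le> F (vec n (\<lambda>i. if i \<in> Fr y then sB y / real (card (Fr y)) else s i))"
    by (rule avgU[OF pvs FrN sFr])
  have "vec n (\<lambda>i. if i \<in> Fr y then sB y / real (card (Fr y)) else s i) = vec n (u y)"
  proof (rule vec_cong)
    fix l assume l: "l \<in> {1..n}"
    have nA: "l \<in> {1..<j} \<Longrightarrow> l \<notin> Aset y \<Longrightarrow> pw l y = 0"
      using pw_zero[OF y l] unfolding Aset_def by auto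
    show "(if l \<in> Fr y then sB y / real (card (Fr y)) else s l) = u y l"
    proof (cases "l \<in> Fr y")
      case True
      then have "l \<notin> Aset y" unfolding Fr_def by auto
      then show ?thesis using True nA l unfolding u_def by auto
    next
      case False
      then have "l \<notin> D" using D by auto
      moreover have "l \<in> Aset y \<Longrightarrow> l < j" unfolding Aset_def by auto
      ultimately show ?thesis using False nA l unfolding u_def s_def by auto
    qed
  qed
  then show ?thesis using F1 U by simp
qed

end
end


context ub begin

lemma B_nn: "0 \<le> B" using bnd[OF pv_pif] by simp

lemma u_le1: "y \<in> Yp \<Longrightarrow> l \<in> {1..n} \<Longrightarrow> u y l \<le> 1"
proof -
  assume y: "y \<in> Yp" and l: "l \<in> {1..n}"
  have "u y l \<le> sum (u y) {1..n}" by (rule member_le_sum) (use u_nn[OF y] l in auto)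
  then show ?thesis using u_sum[OF y] by simp
qed

lemma ob_summ: "ob summable_on Yp" using ob_hsY summable_on_def by blast

lemma u_summ: "l \<in> {1..n} \<Longrightarrow> (\<lambda>y. ob y * u y l) summable_on Yp"
proof -
  assume l: "l \<in> {1..n}"
  show ?thesis
  proof (rule summable_on_comparison_test[OF ob_summ])
    fix y assume y: "y \<in> Yp"
    show "ob y * u y l \<le> ob y" using u_le1[OF y l] ob_nn[of y] by (simp add: mult_left_le)
    show "0 \<le> ob y * u y l" using u_nn[OF y l] ob_nn[of y] by simp
  qed
qed

definition "q l = infsum (\<lambda>y. ob y * u y l) Yp"

lemma q_hs: "l \<in> {1..n} \<Longrightarrow> ((\<lambda>y. ob y * u y l) has_sum q l) Yp"
  unfolding q_def using u_summ by simp

lemma q_nn: "l \<in> {1..n} \<Longrightarrow> 0 \<le> q l"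
  by (rule has_sum_nonneg[OF q_hs]) (use u_nn ob_nn in auto)

lemma q_sum: "sum q {1..n} = 1"
proof -
  have "((\<lambda>y. \<Sum>l\<in>{1..n}. ob y * u y l) has_sum (\<Sum>l\<in>{1..n}. q l)) Yp"
    by (rule has_sum_finsum) (use q_hs in auto)
  moreover have "((\<lambda>y. \<Sum>l\<in>{1..n}. ob y * u y l) has_sum (\<Sum>l\<in>{1..n}. q l)) Yp \<longleftrightarrow> (ob has_sum (\<Sum>l\<in>{1..n}. q l)) Yp"
    by (rule has_sum_cong) (use u_sum in \<open>simp add: sum_distrib_left[symmetric]\<close>)
  ultimately have "(ob has_sum (\<Sum>l\<in>{1..n}. q l)) Yp" by simp
  from has_sum_unique[OF ob_hsY this] show ?thesis by simp
qed

lemma pv_q: "prob_vec (vec n q)" unfolding prob_vec_vec using q_nn q_sum by auto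

lemma sB_hs: "((\<lambda>y. ob y * sB y) has_sum T) Yp"
proof -
  have "((\<lambda>y. \<Sum>x\<in>{j..n}. ob y * pw x y) has_sum (\<Sum>x\<in>{j..n}. p x)) Yp"
    by (rule has_sum_finsum) (use post_hs j_props in auto)
  then show ?thesis unfolding sB_def T_def tail_mass_def by (simp add: sum_distrib_left)
qed

lemma frac_ineq:
  fixes M' a jj kq :: real
  assumes "a \<le> jj - 1" "M' \<le> kq" "a < kq" "jj \<le> kq" "jj \<le> M'"
  shows "(M' - jj + 1) / (kq - jj + 1) \<le> (M' - a) / (kq - a)"
proof -
  have id: "(M' - a) * (kq - jj + 1) - (M' - jj + 1) * (kq - a) = (jj - 1 - a) * (kq - M')"
    by (simp add: algebra_simps)
  have "0 \<le> (jj - 1 - a) * (kq - M')" using assms by simp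
  then have "(M' - jj + 1) * (kq - a) \<le> (M' - a) * (kq - jj + 1)" using id by linarith
  moreover have "kq - jj + 1 > 0" "kq - a > 0" using assms by auto
  ultimately show ?thesis by (simp add: divide_simps mult.commute)
qed

lemma prefix_y:
  assumes y: "y \<in> Yp" and m: "m \<le> n"
  defines "t \<equiv> (if m < j then 0 else (real (min m k) - real j + 1) / kk)"
  shows "(\<Sum>l\<in>{l\<in>{1..m}. l < j}. pw l y) + t * sB y \<le> sum (u y) {1..m}"
proof -
  define a where "a = sB y / real (card (Fr y))"
  have sBn: "0 \<le> sB y" unfolding sB_def using pw_nn[OF y] j_props by (intro sum_nonneg) auto
  have "sum (u y) {1..m} = (\<Sum>l\<in>{1..m}. if l < j then pw l y else 0) + (\<Sum>l\<in>{1..m}. if l \<in> Fr y then a else 0)"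
    unfolding u_def a_def by (simp add: sum.distrib)
  also have "(\<Sum>l\<in>{1..m}. if l < j then pw l y else 0) = (\<Sum>l\<in>{l\<in>{1..m}. l < j}. pw l y)"
    by (rule sum.inter_filter[symmetric]) simp
  also have "(\<Sum>l\<in>{1..m}. if l \<in> Fr y then a else 0) = a * real (card ({1..m} \<inter> Fr y))"
    by (simp add: sum.inter_restrict[symmetric] Int_def)
  finally have eq: "sum (u y) {1..m} = (\<Sum>l\<in>{l\<in>{1..m}. l < j}. pw l y) + a * real (card ({1..m} \<inter> Fr y))" .
  have "t * sB y \<le> a * real (card ({1..m} \<inter> Fr y))"
  proof (cases "m < j")
    case True
    then show ?thesis unfolding t_def a_def using sBn by simp
  next
    case False
    show ?thesis
    proof (cases "card (Fr y) = 0")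
      case True
      then have "card (Bset y) = 0" using cardB_le[OF y] by simp
      then have "Bset y = {}" using fins[OF y] by simp
      then have "sB y = 0" using sB_eq[OF y] by simp
      then show ?thesis unfolding a_def t_def by simp
    next
      case cF: False
      define M' where "M' = min m k"
      have AM: "Aset y \<subseteq> {1..M'}" unfolding Aset_def M'_def using False j_props by auto
      have "{1..m} \<inter> Fr y = {1..M'} - Aset y" unfolding Fr_def M'_def by auto
      then have cardI: "card ({1..m} \<inter> Fr y) = M' - card (Aset y)"
        using AM fins[OF y] by (simp add: card_Diff_subset)
      have cA: "card (Aset y) \<le> j - 1"
      proof -
        have "card (Aset y) \<le> card {1..<j}" unfolding Aset_def by (rule card_mono) auto
        then show ?thesis by simp
      qed
      have cAM: "card (Aset y) \<le> M'" using cA False j_props unfolding M'_def by auto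
      have cFr: "card (Fr y) = k - card (Aset y)" by (rule card_Fr[OF y])
      have ak: "card (Aset y) < k" using cF cFr by simp
      have fr: "(real M' - real j + 1) / (real k - real j + 1) \<le> (real M' - real (card (Aset y))) / (real k - real (card (Aset y)))"
        by (rule frac_ineq) (use cA ak False j_props in \<open>auto simp: M'_def of_nat_diff\<close>)
      have "t = (real M' - real j + 1) / (real k - real j + 1)"
        unfolding t_def M'_def kk_def using False by simp
      moreover have "a * real (card ({1..m} \<inter> Fr y)) = sB y * ((real M' - real (card (Aset y))) / (real k - real (card (Aset y))))"
        unfolding a_def cardI cFr using cAM ak by (simp add: of_nat_diff)
      ultimately show ?thesis using mult_left_mono[OF fr sBn] by (simp add: mult.commute)
    qed
  qed
  then show ?thesis using eq by simp
qed

lemma prefix: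
  assumes m: "m \<le> n"
  shows "sum pif {1..m} \<le> sum q {1..m}"
proof -
  define t where "t = (if m < j then 0 else (real (min m k) - real j + 1) / kk)"
  define H where "H = {l\<in>{1..m}. l < j}"
  have H1: "((\<lambda>y. \<Sum>l\<in>H. ob y * pw l y) has_sum (\<Sum>l\<in>H. p l)) Yp"
    by (rule has_sum_finsum) (use post_hs m in \<open>auto simp: H_def\<close>)
  have H2: "((\<lambda>y. t * (ob y * sB y)) has_sum (t * T)) Yp" by (rule has_sum_cmult_right[OF sB_hs])
  have L: "((\<lambda>y. ob y * ((\<Sum>l\<in>H. pw l y) + t * sB y)) has_sum ((\<Sum>l\<in>H. p l) + t * T)) Yp"
    using has_sum_add[OF H1 H2] by (simp add: algebra_simps sum_distrib_left)
  have R: "((\<lambda>y. ob y * sum (u y) {1..m}) has_sum sum q {1..m}) Yp"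
    using has_sum_finsum[where I="{1..m}" and f="\<lambda>l y. ob y * u y l" and s=q and A=Yp] q_hs m
    by (simp add: sum_distrib_left)
  have le: "(\<Sum>l\<in>H. p l) + t * T \<le> sum q {1..m}"
  proof (rule has_sum_mono[OF L R])
    fix y assume y: "y \<in> Yp"
    show "ob y * ((\<Sum>l\<in>H. pw l y) + t * sB y) \<le> ob y * sum (u y) {1..m}"
      using prefix_y[OF y m] ob_nn[of y] unfolding H_def t_def by (intro mult_left_mono) auto
  qed
  have "sum pif {1..m} = (\<Sum>l\<in>H. p l) + t * T"
  proof (cases "m < j")
    case True
    then have "H = {1..m}" unfolding H_def by auto
    moreover have "sum pif {1..m} = sum p {1..m}" using True unfolding pif_def by (intro sum.cong) auto
    ultimately show ?thesis using True unfolding t_def by simp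
  next
    case False
    then have Hj: "H = {1..<j}" unfolding H_def by auto
    have "sum pif {1..m} = sum pif {1..<j} + sum pif {j..m}"
    proof -
      have "{1..m} = {1..<j} \<union> {j..m}" using False j_props by auto
      moreover have "sum pif ({1..<j} \<union> {j..m}) = sum pif {1..<j} + sum pif {j..m}"
        by (rule sum.union_disjoint) auto
      ultimately show ?thesis by simp
    qed
    also have "sum pif {1..<j} = sum p {1..<j}" unfolding pif_def by (intro sum.cong) auto
    also have "sum pif {j..m} = sum (\<lambda>_. c) {j..min m k}"
    proof -
      have "sum pif {j..m} = sum pif {j..min m k}"
        by (rule sum.mono_neutral_right) (auto simp: pif_def)
      also have "\<dots> = sum (\<lambda>_. c) {j..min m k}" unfolding pif_def by (intro sum.cong) auto
      finally show ?thesis .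
    qed
    also have "\<dots> = (real (min m k) - real j + 1) * c"
      using False j_props by (simp add: of_nat_diff)
    also have "(real (min m k) - real j + 1) * c = t * T"
      unfolding t_def c_def using False by simp
    finally show ?thesis using Hj by simp
  qed
  then show ?thesis using le by simp
qed

end


context ub begin

lemma fin_bound:
  assumes S: "finite S" "S \<subseteq> Yp"
  shows "(\<Sum>y\<in>S. ob y * F (vec n (\<lambda>x. pw x y))) + B * sum ob S \<le> F (vec n q) + B"
proof -
  define m where "m = sum ob S"
  have m0: "0 \<le> m" unfolding m_def using ob_nn by (simp add: sum_nonneg)
  have hsD: "(ob has_sum (1 - m)) (Yp - S)"
    unfolding m_def by (rule has_sum_Diff[OF ob_hsY has_sum_finite[OF S(1)] S(2)])
  have m1: "m \<le> 1" using has_sum_nonneg[OF hsD] ob_nn by auto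
  define r where "r l = q l - (\<Sum>y\<in>S. ob y * u y l)" for l
  have r_hs: "((\<lambda>y. ob y * u y l) has_sum r l) (Yp - S)" if l: "l \<in> {1..n}" for l
    unfolding r_def by (rule has_sum_Diff[OF q_hs[OF l] has_sum_finite[OF S(1)] S(2)])
  have r_nn: "0 \<le> r l" if l: "l \<in> {1..n}" for l
  proof (rule has_sum_nonneg[OF r_hs[OF l]])
    fix y assume "y \<in> Yp - S"
    then show "0 \<le> ob y * u y l" using u_nn[OF _ l] ob_nn by simp
  qed
  have r_sum: "sum r {1..n} = 1 - m"
  proof -
    have "sum r {1..n} = sum q {1..n} - (\<Sum>y\<in>S. ob y * sum (u y) {1..n})"
      unfolding r_def by (simp add: sum_subtractf sum_distrib_left sum.swap[of _ S])
    also have "(\<Sum>y\<in>S. ob y * sum (u y) {1..n}) = m"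
      unfolding m_def using u_sum S(2) by (intro sum.cong) auto
    finally show ?thesis using q_sum by simp
  qed
  define f where "f i = (case i of None \<Rightarrow> (\<lambda>l. if m < 1 then r l / (1 - m) else pif l) | Some y \<Rightarrow> u y)" for i
  define w where "w i = (case i of None \<Rightarrow> 1 - m | Some y \<Rightarrow> ob y)" for i
  define I where "I = insert None (Some ` S)"
  have finI: "finite I" unfolding I_def using S by simp
  have NI: "None \<notin> Some ` S" by auto
  have sumI: "\<And>g :: 'y option \<Rightarrow> real. sum g I = g None + (\<Sum>y\<in>S. g (Some y))"
    unfolding I_def using S NI by (simp add: sum.reindex)
  have pvN: "prob_vec (vec n (f None))"
  proof (cases "m < 1")
    case True
    have "sum (\<lambda>l. r l / (1 - m)) {1..n} = 1" using r_sum True by (simp add: sum_divide_distrib[symmetric])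
    then show ?thesis unfolding prob_vec_vec f_def using True r_nn by auto
  next
    case False then show ?thesis unfolding f_def using pv_pif by simp
  qed
  have J: "(\<Sum>i\<in>I. w i * F (vec n (f i))) \<le> F (vec n (\<lambda>l. \<Sum>i\<in>I. w i * f i l))"
  proof (rule jensen[OF finI])
    show "\<And>i. i \<in> I \<Longrightarrow> 0 \<le> w i" unfolding I_def w_def using m1 ob_nn by auto
    show "sum w I = 1" unfolding sumI w_def m_def by simp
    show "\<And>i. i \<in> I \<Longrightarrow> prob_vec (vec n (f i))"
      unfolding I_def using pvN S(2) pv_u by (auto simp: f_def)
  qed
  have vq: "vec n (\<lambda>l. \<Sum>i\<in>I. w i * f i l) = vec n q"
  proof (rule vec_cong)
    fix l assume l: "l \<in> {1..n}"
    have "(\<Sum>i\<in>I. w i * f i l) = (1 - m) * f None l + (\<Sum>y\<in>S. ob y * u y l)"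
      unfolding sumI by (simp add: w_def f_def)
    also have "(1 - m) * f None l = r l"
    proof (cases "m < 1")
      case True then show ?thesis unfolding f_def by simp
    next
      case False
      then have "m = 1" using m1 by simp
      then have "sum r {1..n} = 0" using r_sum by simp
      then have "r l = 0" using sum_nonneg_eq_0_iff[of "{1..n}" r] r_nn l by auto
      then show ?thesis using \<open>m = 1\<close> by simp
    qed
    finally show "(\<Sum>i\<in>I. w i * f i l) = q l" unfolding r_def by simp
  qed
  have LHS: "(\<Sum>i\<in>I. w i * F (vec n (f i))) = (1 - m) * F (vec n (f None)) + (\<Sum>y\<in>S. ob y * F (vec n (u y)))"
    unfolding sumI by (simp add: w_def f_def)
  have FN: "- B \<le> F (vec n (f None))" using bnd[OF pvN] by simp
  have "(\<Sum>y\<in>S. ob y * F (vec n (\<lambda>x. pw x y))) \<le> (\<Sum>y\<in>S. ob y * F (vec n (u y)))"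
    using S(2) U1 ob_nn by (intro sum_mono mult_left_mono) auto
  moreover have "(1 - m) * (- B) \<le> (1 - m) * F (vec n (f None))" using FN m1 by (intro mult_left_mono) auto
  ultimately show ?thesis using J vq LHS unfolding m_def by (simp add: algebra_simps)
qed

lemma main_bound: "infsum (\<lambda>y. ob y * F (vec n (\<lambda>x. pw x y))) Yp \<le> F (vec n q)"
proof -
  define g where "g y = ob y * F (vec n (\<lambda>x. pw x y))" for y
  have gs: "g summable_on Yp"
  proof -
    have "Infinite_Sum.abs_summable_on g Yp"
    proof (rule Infinite_Sum.abs_summable_on_comparison_test)
      show "Infinite_Sum.abs_summable_on (\<lambda>y. B * ob y) Yp"
        using summable_on_iff_abs_summable_on_real[THEN iffD1, OF summable_on_cmult_right[OF ob_summ, of B]] .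
      fix y assume y: "y \<in> Yp"
      have "\<bar>F (vec n (\<lambda>x. pw x y))\<bar> \<le> B" by (rule bnd[OF pv_post[OF y]])
      then have "ob y * \<bar>F (vec n (\<lambda>x. pw x y))\<bar> \<le> ob y * B"
        using ob_nn[of y] by (rule mult_left_mono)
      moreover have "norm (g y) = ob y * \<bar>F (vec n (\<lambda>x. pw x y))\<bar>"
        unfolding g_def using ob_nn[of y] by (simp add: abs_mult)
      moreover have "norm (B * ob y) = ob y * B" using ob_nn[of y] B_nn by (simp add: abs_mult)
      ultimately show "norm (g y) \<le> norm (B * ob y)" by simp
    qed
    then show ?thesis using summable_on_iff_abs_summable_on_real[THEN iffD2] by blast
  qed
  have h: "((\<lambda>y. g y + B * ob y) has_sum (infsum g Yp + B * 1)) Yp"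
    by (rule has_sum_add[OF has_sum_infsum[OF gs] has_sum_cmult_right[OF ob_hsY]])
  have "infsum g Yp + B * 1 \<le> F (vec n q) + B"
  proof (rule has_sum_le_finite_sums[OF h])
    fix S assume "finite S" "S \<subseteq> Yp"
    then show "(\<Sum>y\<in>S. g y + B * ob y) \<le> F (vec n q) + B"
      using fin_bound unfolding g_def by (simp add: sum.distrib sum_distrib_left)
  qed
  then show ?thesis unfolding g_def by simp
qed

lemma ub_final: "infsum (\<lambda>y. out_prob p n W y * F (posterior p n W y)) {y. out_prob p n W y > 0} \<le> F (pi_vec p n k)"
proof -
  have "infsum (\<lambda>y. out_prob p n W y * F (posterior p n W y)) {y. out_prob p n W y > 0}
      = infsum (\<lambda>y. ob y * F (vec n (\<lambda>x. pw x y))) Yp"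
    unfolding Yp_def ob_def posterior_eq[symmetric] ..
  also have "\<dots> \<le> F (vec n q)" by (rule main_bound)
  also have "\<dots> \<le> F (vec n pif)"
    by (rule majS[OF pv_q pv_pif pif_dec prefix]) auto
  also have "\<dots> = F (vec k pif)" by (rule F_ext[OF pv_pik]) (use kn j_props in \<open>auto simp: pif_def\<close>)
  finally show ?thesis using pi_vec_eq by simp
qed

end


lemma ge_parts:
  assumes "gen_entropy \<eta> F"
  shows "\<exists>B. \<forall>q. prob_vec q \<longrightarrow> \<bar>F q\<bar> \<le> B"
    "\<And>q q'. prob_vec q \<Longrightarrow> mset q' = mset q \<Longrightarrow> F q' = F q"
    "\<And>q. prob_vec q \<Longrightarrow> F (q @ [0]) = F q"
    "(mono \<eta> \<and> concave_F F) \<or> (antimono \<eta> \<and> convex_F F)"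
proof -
  note g = assms[unfolded gen_entropy_def]
  show "\<exists>B. \<forall>q. prob_vec q \<longrightarrow> \<bar>F q\<bar> \<le> B" by (rule conjunct1[OF g])
  show "\<And>q q'. prob_vec q \<Longrightarrow> mset q' = mset q \<Longrightarrow> F q' = F q"
    using conjunct1[OF conjunct2[OF g]] by blast
  show "\<And>q. prob_vec q \<Longrightarrow> F (q @ [0]) = F q"
    using conjunct1[OF conjunct2[OF conjunct2[OF g]]] by blast
  show "(mono \<eta> \<and> concave_F F) \<or> (antimono \<eta> \<and> convex_F F)"
    by (rule conjunct2[OF conjunct2[OF conjunct2[OF g]]])
qed

lemma ent_neg: assumes "gen_entropy \<eta> F" "antimono \<eta>" "convex_F F" shows "ent (\<lambda>q. - F q)"
proof
  fix q q' :: "real list"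
  show "prob_vec q \<Longrightarrow> mset q' = mset q \<Longrightarrow> - F q' = - F q"
    using ge_parts(2)[OF assms(1), of q q'] by argo
  show "prob_vec q \<Longrightarrow> - F (q @ [0]) = - F q"
    using ge_parts(3)[OF assms(1), of q] by argo
next
  show "concave_F (\<lambda>q. - F q)"
    unfolding concave_F_def
  proof (intro allI impI)
    fix q1 q2 :: "real list" and l :: real
    assume h: "prob_vec q1 \<and> prob_vec q2 \<and> length q1 = length q2 \<and> 0 \<le> l \<and> l \<le> 1"
    have "F (map2 (\<lambda>a b. l * a + (1 - l) * b) q1 q2) \<le> l * F q1 + (1 - l) * F q2"
      using assms(3) h unfolding convex_F_def by blast
    then show "l * - F q1 + (1 - l) * - F q2 \<le> - F (map2 (\<lambda>a b. l * a + (1 - l) * b) q1 q2)"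
      by linarith
  qed
qed

lemma ent_pos: assumes "gen_entropy \<eta> F" "concave_F F" shows "ent F"
proof
  fix q q' :: "real list"
  show "prob_vec q \<Longrightarrow> mset q' = mset q \<Longrightarrow> F q' = F q"
    by (rule ge_parts(2)[OF assms(1)])
  show "prob_vec q \<Longrightarrow> F (q @ [0]) = F q"
    by (rule ge_parts(3)[OF assms(1)])
next
  show "concave_F F" by (rule assms(2))
qed

lemma cond_neg: "cond_entropy \<eta> F p n W = cond_entropy (\<lambda>x. \<eta> (- x)) (\<lambda>q. - F q) p n W"
  unfolding cond_entropy_def by (simp add: infsum_uminus)

context chan_ctx begin

lemma ub_entropy:
  fixes W :: "nat \<Rightarrow> 'y \<Rightarrow> real"
  assumes ge: "gen_entropy \<eta> F" and fW: "feasible n k W"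
  shows "cond_entropy \<eta> F p n W \<le> \<eta> (F (pi_vec p n k))"
proof -
  obtain B where B: "\<forall>q. prob_vec q \<longrightarrow> \<bar>F q\<bar> \<le> B" using ge_parts(1)[OF ge] by blast
  have cases: "(mono \<eta> \<and> concave_F F) \<or> (antimono \<eta> \<and> convex_F F)" by (rule ge_parts(4)[OF ge])
  then show ?thesis
  proof
    assume h: "mono \<eta> \<and> concave_F F"
    interpret U: ub n k p F W B
      by (intro ub.intro chan_ctx_axioms ent_pos[OF ge] ub_axioms.intro fW) (use h B in auto)
    have "infsum (\<lambda>y. out_prob p n W y * F (posterior p n W y)) {y. out_prob p n W y > 0} \<le> F (pi_vec p n k)"
      by (rule U.ub_final)
    then show ?thesis unfolding cond_entropy_def using h by (auto intro: monoD)
  next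
    assume h: "antimono \<eta> \<and> convex_F F"
    interpret U: ub n k p "\<lambda>q. - F q" W B
      by (intro ub.intro chan_ctx_axioms ent_neg[OF ge] ub_axioms.intro fW) (use h B in auto)
    have "infsum (\<lambda>y. out_prob p n W y * - F (posterior p n W y)) {y. out_prob p n W y > 0} \<le> - F (pi_vec p n k)"
      by (rule U.ub_final)
    then have "F (pi_vec p n k) \<le> infsum (\<lambda>y. out_prob p n W y * F (posterior p n W y)) {y. out_prob p n W y > 0}"
      by (simp add: infsum_uminus)
    then show ?thesis unfolding cond_entropy_def using h by (auto intro: antimonoD)
  qed
qed

lemma opt_ok:
  assumes ls: "lin_sol p n k v"
  shows "feasible n k (opt_channel p n k v) \<and>
    (\<forall>\<eta> F. gen_entropy \<eta> F \<longrightarrow> cond_entropy \<eta> F p n (opt_channel p n k v) = \<eta> (F (pi_vec p n k)))"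
proof (intro conjI allI impI)
  show "feasible n k (opt_channel p n k v)" by (rule opt_feasible[OF ls])
  fix \<eta> F assume ge: "gen_entropy \<eta> F"
  have cases: "(mono \<eta> \<and> concave_F F) \<or> (antimono \<eta> \<and> convex_F F)" by (rule ge_parts(4)[OF ge])
  then show "cond_entropy \<eta> F p n (opt_channel p n k v) = \<eta> (F (pi_vec p n k))"
  proof
    assume h: "mono \<eta> \<and> concave_F F"
    show ?thesis by (rule opt_entropy[OF ls ent_pos[OF ge]]) (use h in simp)
  next
    assume h: "antimono \<eta> \<and> convex_F F"
    have "cond_entropy (\<lambda>x. \<eta> (- x)) (\<lambda>q. - F q) p n (opt_channel p n k v) = \<eta> (- (- F (pi_vec p n k)))"
      by (rule opt_entropy[OF ls ent_neg[OF ge]]) (use h in simp_all)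
    then show ?thesis using cond_neg[of \<eta> F p n "opt_channel p n k v"] by simp
  qed
qed

end

theorem theorem1:
  fixes n k :: nat and p :: "nat \<Rightarrow> real"
  assumes "0 < k" and "k < n"
    and "\<forall>i\<in>{1..<n}. p (i + 1) \<le> p i"
    and "p n > 0"
    and "(\<Sum>i=1..n. p i) = 1"
  shows "(\<forall>\<eta> F. gen_entropy \<eta> F \<longrightarrow>
            (\<forall>W :: nat \<Rightarrow> 'y \<Rightarrow> real. feasible n k W \<longrightarrow>
                cond_entropy \<eta> F p n W \<le> \<eta> (F (pi_vec p n k))) \<and>
            (\<exists>W :: nat \<Rightarrow> nat set \<Rightarrow> real. feasible n k W \<and>
                cond_entropy \<eta> F p n W = \<eta> (F (pi_vec p n k))))
       \<and> (\<exists>v. lin_sol p n k v)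
       \<and> (\<forall>v. lin_sol p n k v \<longrightarrow>
            feasible n k (opt_channel p n k v) \<and>
            (\<forall>\<eta> F. gen_entropy \<eta> F \<longrightarrow>
               cond_entropy \<eta> F p n (opt_channel p n k v) = \<eta> (F (pi_vec p n k))))"
proof -
  interpret C: chan_ctx n k p using assms by unfold_locales auto
  obtain v0 where v0: "lin_sol p n k v0" using C.lin_sol_ex by blast
  show ?thesis
  proof (intro conjI allI impI)
    fix \<eta> F W assume "gen_entropy \<eta> F" "feasible n k (W :: nat \<Rightarrow> 'y \<Rightarrow> real)"
    then show "cond_entropy \<eta> F p n W \<le> \<eta> (F (pi_vec p n k))" by (rule C.ub_entropy)
  next
    fix \<eta> F assume "gen_entropy \<eta> F"
    then show "\<exists>W :: nat \<Rightarrow> nat set \<Rightarrow> real. feasible n k W \<and> cond_entropy \<eta> F p n W = \<eta> (F (pi_vec p n k))"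
      using C.opt_ok[OF v0] by blast
  next
    show "\<exists>v. lin_sol p n k v" using v0 by blast
  next
    fix v assume "lin_sol p n k v"
    then show "feasible n k (opt_channel p n k v)" using C.opt_ok by blast
  next
    fix v \<eta> F assume "lin_sol p n k v" "gen_entropy \<eta> F"
    then show "cond_entropy \<eta> F p n (opt_channel p n k v) = \<eta> (F (pi_vec p n k))" using C.opt_ok by blast
  qed
qed


end
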